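(* In the setting of the context, for each of the following six families of linear inequalities in $(\mathbf x,\mathbf y)\in\mathbb R^{2T}$, and for any given point $(\mathbf x,\mathbf y)\in\mathbb R_+^{2T}$, a most violated inequality of the family can be determined in $O(T)$ time if a violated inequality of the family exists. Here $\sigma=\lfloor(\overline C-\overline V)/V\rfloor$ and $\eta$ denotes a real parameter. (F1) $x_t\le\overline C y_t-\sum_{s\in\mathcal S}(\overline C-\overline V-sV)(y_{t-s}-y_{t-s-1})$ over all $\mathcal S\subseteq[0,\min\{L-1,T-2,\sigma\}]_{\mathbb Z}$ and $t\in[1,T]_{\mathbb Z}$ with $t\ge s+2$ for all $s\in\mathcal S$. (F2) $x_t\le\overline C y_t-\sum_{s\in\mathcal S}(\overline C-\overline V-sV)(y_{t+s}-y_{t+s+1})$ over the same $\mathcal S$ and $t\in[1,T]_{\mathbb Z}$ with $t\le T-s-1$ for all $s\in\mathcal S$. (F3) $x_t\le(\overline C-\eta V)y_t+\eta Vy_{t+1}-\sum_{s\in\mathcal S}(\overline C-\overline V-sV)(y_{t-s}-y_{t-s-1})$ over all $\mathcal S\subseteq[0,\min\{L-1,T-3,\sigma\}]_{\mathbb Z}$, real $\eta\in[0,\min\{L-1,(\overline C-\overline V)/V\}]$, and $t\in[1,T-1]_{\mathbb Z}$ with $t\ge s+2$ for all $s\in\mathcal S$. (F4) $x_t\le(\overline C-\eta V)y_t+\eta Vy_{t-1}-\sum_{s\in\mathcal S}(\overline C-\overline V-sV)(y_{t+s}-y_{t+s+1})$ over the same $\mathcal S,\eta$ as in (F3) and $t\in[2,T]_{\mathbb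 Z}$ with $t\le T-s-1$ for all $s\in\mathcal S$. (F5) $x_t\le(\overline V+\eta V)y_t+(\overline C-\overline V-\eta V)y_{t-1}-\sum_{s\in\mathcal S}(\overline C-\overline V-sV)(y_{t-s}-y_{t-s-1})$ over all $\mathcal S\subseteq[1,\min\{L,T-2,\sigma\}]_{\mathbb Z}$, real $\eta\in[0,\min\{L,(\overline C-\overline V)/V\}]$, and $t\in[2,T]_{\mathbb Z}$ with $t\ge s+2$ for all $s\in\mathcal S$. (F6) $x_t\le(\overline V+\eta V)y_t+(\overline C-\overline V-\eta V)y_{t+1}-\sum_{s\in\mathcal S}(\overline C-\overline V-sV)(y_{t+s}-y_{t+s+1})$ over the same $\mathcal S,\eta$ as in (F5) and $t\in[1,T-1]_{\mathbb Z}$ with $t\le T-s-1$ for all $s\in\mathcal S$.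
   Context: For integers $a,b$, $[a,b]_{\mathbb Z}=\{a,a+1,\dots,b\}$ if $a\le b$ and $\emptyset$ otherwise. Fix a positive integer $T$, a positive integer $L$ (minimum up time), and reals $\overline C,\underline C,V,\overline V$ with $\overline C>\underline C>0$, $V>0$, $\overline V+V\le\overline C$ and $\underline C<\overline V<\underline C+V$; $\mathbf x=(x_1,\dots,x_T)$, $\mathbf y=(y_1,\dots,y_T)$. For an inequality $a^\top(\mathbf x,\mathbf y)\le b$, its violation at a given point is $a^\top(\mathbf x,\mathbf y)-b$; it is violated if this is positive, and a most violated inequality of a family is one maximizing this quantity over the family. Time is measured in arithmetic operations and comparisons on the input numbers. *)

theory Defs
  imports Complex_Main
begin

text \<open>An inequality of a family is identified by (S, t, eta); for families without eta, eta = 0.\<close>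
type_synonym ineq = "int set \<times> int \<times> real"

definition sigma :: "real \<Rightarrow> real \<Rightarrow> real \<Rightarrow> int" where
  "sigma Cb Vb V = \<lfloor>(Cb - Vb) / V\<rfloor>"

definition bsum :: "real \<Rightarrow> real \<Rightarrow> real \<Rightarrow> (int \<Rightarrow> real) \<Rightarrow> int set \<Rightarrow> int \<Rightarrow> real" where
  "bsum Cb Vb V y S t = (\<Sum>s\<in>S. (Cb - Vb - real_of_int s * V) * (y (t - s) - y (t - s - 1)))"

definition fsum :: "real \<Rightarrow> real \<Rightarrow> real \<Rightarrow> (int \<Rightarrow> real) \<Rightarrow> int set \<Rightarrow> int \<Rightarrow> real" where
  "fsum Cb Vb V y S t = (\<Sum>s\<in>S. (Cb - Vb - real_of_int s * V) * (y (t + s) - y (t + s + 1)))"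

definition F1 :: "int \<Rightarrow> int \<Rightarrow> real \<Rightarrow> real \<Rightarrow> real \<Rightarrow> ineq set" where
  "F1 T L Cb Vb V = {(S, t, \<eta>). S \<subseteq> {0..min (L - 1) (min (T - 2) (sigma Cb Vb V))}
     \<and> 1 \<le> t \<and> t \<le> T \<and> (\<forall>s\<in>S. s + 2 \<le> t) \<and> \<eta> = 0}"

definition F2 :: "int \<Rightarrow> int \<Rightarrow> real \<Rightarrow> real \<Rightarrow> real \<Rightarrow> ineq set" where
  "F2 T L Cb Vb V = {(S, t, \<eta>). S \<subseteq> {0..min (L - 1) (min (T - 2) (sigma Cb Vb V))}
     \<and> 1 \<le> t \<and> t \<le> T \<and> (\<forall>s\<in>S. t \<le> T - s - 1) \<and> \<eta> = 0}"

definition F3 :: "int \<Rightarrow> int \<Rightarrow> real \<Rightarrow> real \<Rightarrow> real \<Rightarrow> ineq set" where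
  "F3 T L Cb Vb V = {(S, t, \<eta>). S \<subseteq> {0..min (L - 1) (min (T - 3) (sigma Cb Vb V))}
     \<and> 0 \<le> \<eta> \<and> \<eta> \<le> min (real_of_int (L - 1)) ((Cb - Vb) / V)
     \<and> 1 \<le> t \<and> t \<le> T - 1 \<and> (\<forall>s\<in>S. s + 2 \<le> t)}"

definition F4 :: "int \<Rightarrow> int \<Rightarrow> real \<Rightarrow> real \<Rightarrow> real \<Rightarrow> ineq set" where
  "F4 T L Cb Vb V = {(S, t, \<eta>). S \<subseteq> {0..min (L - 1) (min (T - 3) (sigma Cb Vb V))}
     \<and> 0 \<le> \<eta> \<and> \<eta> \<le> min (real_of_int (L - 1)) ((Cb - Vb) / V)
     \<and> 2 \<le> t \<and> t \<le> T \<and> (\<forall>s\<in>S. t \<le> T - s - 1)}"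

definition F5 :: "int \<Rightarrow> int \<Rightarrow> real \<Rightarrow> real \<Rightarrow> real \<Rightarrow> ineq set" where
  "F5 T L Cb Vb V = {(S, t, \<eta>). S \<subseteq> {1..min L (min (T - 2) (sigma Cb Vb V))}
     \<and> 0 \<le> \<eta> \<and> \<eta> \<le> min (real_of_int L) ((Cb - Vb) / V)
     \<and> 2 \<le> t \<and> t \<le> T \<and> (\<forall>s\<in>S. s + 2 \<le> t)}"

definition F6 :: "int \<Rightarrow> int \<Rightarrow> real \<Rightarrow> real \<Rightarrow> real \<Rightarrow> ineq set" where
  "F6 T L Cb Vb V = {(S, t, \<eta>). S \<subseteq> {1..min L (min (T - 2) (sigma Cb Vb V))}
     \<and> 0 \<le> \<eta> \<and> \<eta> \<le> min (real_of_int L) ((Cb - Vb) / V)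
     \<and> 1 \<le> t \<and> t \<le> T - 1 \<and> (\<forall>s\<in>S. t \<le> T - s - 1)}"

fun viol1 :: "real \<Rightarrow> real \<Rightarrow> real \<Rightarrow> (int \<Rightarrow> real) \<Rightarrow> (int \<Rightarrow> real) \<Rightarrow> ineq \<Rightarrow> real" where
  "viol1 Cb Vb V x y (S, t, \<eta>) = x t - (Cb * y t - bsum Cb Vb V y S t)"

fun viol2 :: "real \<Rightarrow> real \<Rightarrow> real \<Rightarrow> (int \<Rightarrow> real) \<Rightarrow> (int \<Rightarrow> real) \<Rightarrow> ineq \<Rightarrow> real" where
  "viol2 Cb Vb V x y (S, t, \<eta>) = x t - (Cb * y t - fsum Cb Vb V y S t)"

fun viol3 :: "real \<Rightarrow> real \<Rightarrow> real \<Rightarrow> (int \<Rightarrow> real) \<Rightarrow> (int \<Rightarrow> real) \<Rightarrow> ineq \<Rightarrow> real" where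
  "viol3 Cb Vb V x y (S, t, \<eta>) =
     x t - ((Cb - \<eta> * V) * y t + \<eta> * V * y (t + 1) - bsum Cb Vb V y S t)"

fun viol4 :: "real \<Rightarrow> real \<Rightarrow> real \<Rightarrow> (int \<Rightarrow> real) \<Rightarrow> (int \<Rightarrow> real) \<Rightarrow> ineq \<Rightarrow> real" where
  "viol4 Cb Vb V x y (S, t, \<eta>) =
     x t - ((Cb - \<eta> * V) * y t + \<eta> * V * y (t - 1) - fsum Cb Vb V y S t)"

fun viol5 :: "real \<Rightarrow> real \<Rightarrow> real \<Rightarrow> (int \<Rightarrow> real) \<Rightarrow> (int \<Rightarrow> real) \<Rightarrow> ineq \<Rightarrow> real" where
  "viol5 Cb Vb V x y (S, t, \<eta>) =
     x t - ((Vb + \<eta> * V) * y t + (Cb - Vb - \<eta> * V) * y (t - 1) - bsum Cb Vb V y S t)"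

fun viol6 :: "real \<Rightarrow> real \<Rightarrow> real \<Rightarrow> (int \<Rightarrow> real) \<Rightarrow> (int \<Rightarrow> real) \<Rightarrow> ineq \<Rightarrow> real" where
  "viol6 Cb Vb V x y (S, t, \<eta>) =
     x t - ((Vb + \<eta> * V) * y t + (Cb - Vb - \<eta> * V) * y (t + 1) - fsum Cb Vb V y S t)"

text \<open>Each internal node costs one unit: an arithmetic operation on two
registers (result appended), loading a constant, or a comparison branching the computation.\<close>

datatype aop = Add | Sub | Mul | Div

fun apply_aop :: "aop \<Rightarrow> real \<Rightarrow> real \<Rightarrow> real" where
  "apply_aop Add a b = a + b"
| "apply_aop Sub a b = a - b"
| "apply_aop Mul a b = a * b"
| "apply_aop Div a b = a / b"

datatype ctree =
    Leaf "int set" int nat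
  | Op aop nat nat ctree
  | Const real ctree
  | Cmp nat nat ctree ctree

fun run :: "ctree \<Rightarrow> real list \<Rightarrow> ineq \<times> nat" where
  "run (Leaf S t i) regs = ((S, t, regs ! i), 0)"
| "run (Op f i j tr) regs =
     (let r = run tr (regs @ [apply_aop f (regs ! i) (regs ! j)]) in (fst r, Suc (snd r)))"
| "run (Const c tr) regs = (let r = run tr (regs @ [c]) in (fst r, Suc (snd r)))"
| "run (Cmp i j tr1 tr2) regs =
     (let r = (if regs ! i \<le> regs ! j then run tr1 regs else run tr2 regs) in (fst r, Suc (snd r)))"

definition input_regs :: "int \<Rightarrow> real \<Rightarrow> real \<Rightarrow> real \<Rightarrow> real \<Rightarrow> (int \<Rightarrow> real) \<Rightarrow> (int \<Rightarrow> real) \<Rightarrow> real list" where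
  "input_regs T Cb Cu V Vb x y = [Cb, Cu, V, Vb] @ map x [1..T] @ map y [1..T]"

definition std_params :: "int \<Rightarrow> int \<Rightarrow> real \<Rightarrow> real \<Rightarrow> real \<Rightarrow> real \<Rightarrow> bool" where
  "std_params T L Cb Cu V Vb \<longleftrightarrow> 1 \<le> T \<and> 1 \<le> L \<and> Cb > Cu \<and> Cu > 0 \<and> V > 0
     \<and> Vb + V \<le> Cb \<and> Cu < Vb \<and> Vb < Cu + V"

definition most_violated_linear_time ::
  "(int \<Rightarrow> int \<Rightarrow> real \<Rightarrow> real \<Rightarrow> real \<Rightarrow> ineq set)
   \<Rightarrow> (real \<Rightarrow> real \<Rightarrow> real \<Rightarrow> (int \<Rightarrow> real) \<Rightarrow> (int \<Rightarrow> real) \<Rightarrow> ineq \<Rightarrow> real) \<Rightarrow> bool" where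
  "most_violated_linear_time fam viol \<longleftrightarrow>
    (\<exists>c::nat. \<forall>T L. 1 \<le> T \<longrightarrow> 1 \<le> L \<longrightarrow> (\<exists>tr. \<forall>Cb Cu V Vb x y.
       std_params T L Cb Cu V Vb \<and> (\<forall>t\<in>{1..T}. 0 \<le> x t \<and> 0 \<le> y t) \<longrightarrow>
       (let regs = input_regs T Cb Cu V Vb x y; r = run tr regs; q = fst r in
          snd r \<le> c * nat T \<and>
          ((\<exists>q'\<in>fam T L Cb Vb V. viol Cb Vb V x y q' > 0) \<longrightarrow>
             q \<in> fam T L Cb Vb V \<and> (\<forall>q'\<in>fam T L Cb Vb V. viol Cb Vb V x y q' \<le> viol Cb Vb V x y q)))))"

end

theory Submission
  imports Defs
begin

datatype expr = Reg nat | Cst real | Bin aop expr expr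

fun ev :: "expr \<Rightarrow> real list \<Rightarrow> real" where
  "ev (Reg i) regs = regs ! i"
| "ev (Cst c) regs = c"
| "ev (Bin f a b) regs = apply_aop f (ev a regs) (ev b regs)"

fun csz :: "expr \<Rightarrow> nat" where
  "csz (Reg i) = 0" | "csz (Cst c) = 1" | "csz (Bin f a b) = csz a + csz b + 1"

fun rok :: "expr \<Rightarrow> nat \<Rightarrow> bool" where
  "rok (Reg i) n = (i < n)" | "rok (Cst c) n = True" | "rok (Bin f a b) n = (rok a n \<and> rok b n)"

fun cmpl :: "expr \<Rightarrow> nat \<Rightarrow> (nat \<Rightarrow> nat \<Rightarrow> ctree) \<Rightarrow> ctree" where
  "cmpl (Reg i) n k = k i n"
| "cmpl (Cst c) n k = Const c (k n (Suc n))"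
| "cmpl (Bin f a b) n k = cmpl a n (\<lambda>ia n1. cmpl b n1 (\<lambda>ib n2. Op f ia ib (k n2 (Suc n2))))"

definition steps :: "ctree \<Rightarrow> real list \<Rightarrow> ctree \<Rightarrow> real list \<Rightarrow> nat \<Rightarrow> bool" where
  "steps tr regs tr' regs' c \<longleftrightarrow> run tr regs = (fst (run tr' regs'), snd (run tr' regs') + c)"

lemma steps_refl: "steps tr regs tr regs 0" by (simp add: steps_def)

lemma steps_trans: "steps t1 r1 t2 r2 c1 \<Longrightarrow> steps t2 r2 t3 r3 c2 \<Longrightarrow> steps t1 r1 t3 r3 (c1 + c2)"
  by (simp add: steps_def)

lemma steps_cmp: "steps (Cmp i j a b) regs (if regs ! i \<le> regs ! j then a else b) regs 1"
  by (simp add: steps_def Let_def)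

lemma steps_op: "steps (Op f i j tr) regs tr (regs @ [apply_aop f (regs ! i) (regs ! j)]) 1"
  by (simp add: steps_def Let_def)

lemma steps_const: "steps (Const c tr) regs tr (regs @ [c]) 1"
  by (simp add: steps_def Let_def)

lemma rok_mono: "rok e n \<Longrightarrow> n \<le> m \<Longrightarrow> rok e m"
  by (induction e) auto

lemma ev_append: "rok e (length regs) \<Longrightarrow> ev e (regs @ ext) = ev e regs"
  by (induction e) (auto simp: nth_append)

lemma comp_steps:
  "rok e (length regs) \<Longrightarrow> \<exists>ext i. i < length regs + length ext \<and> (regs @ ext) ! i = ev e regs
     \<and> steps (cmpl e (length regs) k) regs (k i (length regs + length ext)) (regs @ ext) (csz e)"
proof (induction e arbitrary: regs k)
  case (Reg x)
  then show ?case by (intro exI[of _ "[]"] exI[of _ x]) (simp add: steps_refl)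
next
  case (Cst c)
  then show ?case by (intro exI[of _ "[c]"] exI[of _ "length regs"]) (simp add: steps_const[simplified])
next
  case (Bin f a b)
  from Bin.prems have ra: "rok a (length regs)" and rb: "rok b (length regs)" by auto
  obtain e1 ia where ia: "ia < length regs + length e1" "(regs @ e1) ! ia = ev a regs"
    and s1: "steps (cmpl a (length regs) (\<lambda>ia n1. cmpl b n1 (\<lambda>ib n2. Op f ia ib (k n2 (Suc n2))))) regs
        (cmpl b (length regs + length e1) (\<lambda>ib n2. Op f ia ib (k n2 (Suc n2)))) (regs @ e1) (csz a)"
    using Bin.IH(1)[OF ra, of "\<lambda>ia n1. cmpl b n1 (\<lambda>ib n2. Op f ia ib (k n2 (Suc n2)))"] by blast
  have s1': "steps (cmpl a (length regs) (\<lambda>ia n1. cmpl b n1 (\<lambda>ib n2. Op f ia ib (k n2 (Suc n2))))) regs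
        (cmpl b (length (regs @ e1)) (\<lambda>ib n2. Op f ia ib (k n2 (Suc n2)))) (regs @ e1) (csz a)" using s1 by simp
  have rb': "rok b (length (regs @ e1))" using rok_mono[OF rb] by simp
  obtain e2 ib where ib: "ib < length (regs @ e1) + length e2" "((regs @ e1) @ e2) ! ib = ev b (regs @ e1)"
    and s2: "steps (cmpl b (length (regs @ e1)) (\<lambda>ib n2. Op f ia ib (k n2 (Suc n2)))) (regs @ e1)
        (Op f ia ib (k (length (regs @ e1) + length e2) (Suc (length (regs @ e1) + length e2)))) ((regs @ e1) @ e2) (csz b)"
    using Bin.IH(2)[OF rb', of "\<lambda>ib n2. Op f ia ib (k n2 (Suc n2))"] by blast
  have evb: "ev b (regs @ e1) = ev b regs" using ev_append[OF rb] .
  have ia2: "((regs @ e1) @ e2) ! ia = ev a regs" using ia by (metis length_append nth_append_left)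
  let ?v = "apply_aop f (ev a regs) (ev b regs)"
  have s3: "steps (Op f ia ib (k (length (regs @ e1) + length e2) (Suc (length (regs @ e1) + length e2)))) ((regs @ e1) @ e2)
      (k (length (regs @ e1) + length e2) (Suc (length (regs @ e1) + length e2))) (((regs @ e1) @ e2) @ [?v]) 1"
    using steps_op[of f ia ib _ "(regs @ e1) @ e2"] ia2 ib(2) evb by simp
  show ?case
    apply (rule exI[of _ "e1 @ e2 @ [?v]"], rule exI[of _ "length regs + length e1 + length e2"])
    using steps_trans[OF steps_trans[OF s1' s2] s3] by (simp add: nth_append add.assoc)
qed

definition sel :: "nat \<Rightarrow> nat \<Rightarrow> nat \<Rightarrow> nat \<Rightarrow> nat \<Rightarrow> nat \<Rightarrow> (nat \<Rightarrow> nat \<Rightarrow> ctree) \<Rightarrow> ctree" where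
  "sel z i j a b n k = Cmp i j (cmpl (Bin Add (Reg a) (Reg z)) n k) (cmpl (Bin Add (Reg b) (Reg z)) n k)"

lemma sel_steps:
  assumes "length regs = n" "z < n" "regs ! z = 0" "i < n" "j < n" "a < n" "b < n"
  shows "\<exists>ext idx. idx < n + length ext \<and> (regs @ ext) ! idx = (if regs ! i \<le> regs ! j then regs ! a else regs ! b)
     \<and> steps (sel z i j a b n k) regs (k idx (n + length ext)) (regs @ ext) 2"
proof (cases "regs ! i \<le> regs ! j")
  case True
  obtain ext idx where h: "idx < length regs + length ext" "(regs @ ext) ! idx = ev (Bin Add (Reg a) (Reg z)) regs"
    "steps (cmpl (Bin Add (Reg a) (Reg z)) (length regs) k) regs (k idx (length regs + length ext)) (regs @ ext) (csz (Bin Add (Reg a) (Reg z)))"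
    using comp_steps[of "Bin Add (Reg a) (Reg z)" regs k] assms by auto
  have c: "steps (sel z i j a b n k) regs (cmpl (Bin Add (Reg a) (Reg z)) (length regs) k) regs 1"
    using steps_cmp[of i j _ _ regs] True assms unfolding sel_def by simp
  show ?thesis using steps_trans[OF c h(3)] h(1,2) True assms
    by (intro exI[of _ ext] exI[of _ idx]) (simp add: numeral_2_eq_2)
next
  case False
  obtain ext idx where h: "idx < length regs + length ext" "(regs @ ext) ! idx = ev (Bin Add (Reg b) (Reg z)) regs"
    "steps (cmpl (Bin Add (Reg b) (Reg z)) (length regs) k) regs (k idx (length regs + length ext)) (regs @ ext) (csz (Bin Add (Reg b) (Reg z)))"
    using comp_steps[of "Bin Add (Reg b) (Reg z)" regs k] assms by auto
  have c: "steps (sel z i j a b n k) regs (cmpl (Bin Add (Reg b) (Reg z)) (length regs) k) regs 1"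
    using steps_cmp[of i j _ _ regs] False assms unfolding sel_def by simp
  show ?thesis using steps_trans[OF c h(3)] h(1,2) False assms
    by (intro exI[of _ ext] exI[of _ idx]) (simp add: numeral_2_eq_2)
qed

fun ksc :: "nat \<Rightarrow> nat \<Rightarrow> int \<Rightarrow> int \<Rightarrow> nat \<Rightarrow> (int \<Rightarrow> nat \<Rightarrow> ctree) \<Rightarrow> ctree" where
  "ksc iq 0 k Kc n cont = cont Kc n"
| "ksc iq (Suc r) k Kc n cont = Const (real_of_int k)
     (Cmp n iq (ksc iq r (k+1) k (Suc n) cont) (ksc iq r (k+1) Kc (Suc n) cont))"

fun kres :: "real \<Rightarrow> nat \<Rightarrow> int \<Rightarrow> int \<Rightarrow> int" where
  "kres q 0 k Kc = Kc"
| "kres q (Suc r) k Kc = kres q r (k+1) (if real_of_int k \<le> q then k else Kc)"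

lemma ksc_steps:
  "length regs = n \<Longrightarrow> iq < n \<Longrightarrow> regs ! iq = q \<Longrightarrow>
   \<exists>ext. steps (ksc iq r k Kc n cont) regs (cont (kres q r k Kc) (n + length ext)) (regs @ ext) (2 * r)"
proof (induction r arbitrary: regs n k Kc)
  case 0
  then show ?case by (intro exI[of _ "[]"]) (simp add: steps_refl)
next
  case (Suc r)
  let ?R = "regs @ [real_of_int k]"
  have l: "length ?R = Suc n" "iq < Suc n" "?R ! iq = q" using Suc.prems by (auto simp: nth_append)
  have c: "steps (ksc iq (Suc r) k Kc n cont) regs
     (if real_of_int k \<le> q then ksc iq r (k+1) k (Suc n) cont else ksc iq r (k+1) Kc (Suc n) cont) ?R 2"
    using Suc.prems by (auto simp: steps_def Let_def nth_append)
  show ?case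
  proof (cases "real_of_int k \<le> q")
    case True
    obtain ext where e: "steps (ksc iq r (k+1) k (Suc n) cont) ?R (cont (kres q r (k+1) k) (Suc n + length ext)) (?R @ ext) (2*r)"
      using Suc.IH[OF l] by blast
    show ?thesis using steps_trans[OF c[simplified True if_True] e] True
      by (intro exI[of _ "real_of_int k # ext"]) simp
  next
    case False
    obtain ext where e: "steps (ksc iq r (k+1) Kc (Suc n) cont) ?R (cont (kres q r (k+1) Kc) (Suc n + length ext)) (?R @ ext) (2*r)"
      using Suc.IH[OF l] by blast
    show ?thesis using steps_trans[OF c[simplified False if_False] e] False
      by (intro exI[of _ "real_of_int k # ext"]) simp
  qed
qed

lemma kres_val: "kres q r k Kc = (if r = 0 then Kc else if real_of_int k \<le> q then min (k + int r - 1) \<lfloor>q\<rfloor> else Kc)"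
proof (induction r arbitrary: k Kc)
  case 0 then show ?case by simp
next
  case (Suc r)
  show ?case
  proof (cases "real_of_int k \<le> q")
    case True
    then have fk: "k \<le> \<lfloor>q\<rfloor>" by (simp add: le_floor_iff)
    show ?thesis
    proof (cases "real_of_int (k+1) \<le> q")
      case True
      then have "k + 1 \<le> \<lfloor>q\<rfloor>" by (simp add: le_floor_iff)
      then show ?thesis using Suc.IH[of "k+1" k] True fk \<open>real_of_int k \<le> q\<close> by auto
    next
      case False
      then have "q < real_of_int (k+1)" by simp
      then have "\<lfloor>q\<rfloor> < k + 1" using floor_less_iff by blast
      then have "\<lfloor>q\<rfloor> = k" using fk by linarith
      then show ?thesis using Suc.IH[of "k+1" k] False \<open>real_of_int k \<le> q\<close> by auto
    qed
  next
    case False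
    then have "\<not> real_of_int (k+1) \<le> q" by simp
    then show ?thesis using Suc.IH[of "k+1" Kc] False by auto
  qed
qed

definition dsem :: "(int \<Rightarrow> real) \<Rightarrow> int \<Rightarrow> real" where
  "dsem y l = (if y l \<le> y (l-1) then 0 else y l - y (l-1))"
definition Psem :: "(int \<Rightarrow> real) \<Rightarrow> int \<Rightarrow> real" where
  "Psem y j = (\<Sum>l\<in>{2..j}. dsem y l)"
definition Qsem :: "(int \<Rightarrow> real) \<Rightarrow> int \<Rightarrow> real" where
  "Qsem y j = (\<Sum>l\<in>{2..j}. real_of_int l * dsem y l)"

lemma Psem_rec: "2 \<le> j \<Longrightarrow> Psem y j = Psem y (j-1) + dsem y j"
proof -
  assume "2 \<le> j"
  then have "{2..j} = insert j {2..j-1}" by auto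
  then show ?thesis unfolding Psem_def by simp
qed

lemma Qsem_rec: "2 \<le> j \<Longrightarrow> Qsem y j = Qsem y (j-1) + real_of_int j * dsem y j"
proof -
  assume "2 \<le> j"
  then have "{2..j} = insert j {2..j-1}" by auto
  then show ?thesis unfolding Qsem_def by simp
qed

definition pinv :: "(int \<Rightarrow> real) \<Rightarrow> real list \<Rightarrow> (int \<Rightarrow> nat) \<Rightarrow> (int \<Rightarrow> nat) \<Rightarrow> int \<Rightarrow> bool" where
  "pinv y regs Pm Qm j \<longleftrightarrow> (\<forall>i \<le> j. Pm i < length regs \<and> regs ! Pm i = Psem y i
      \<and> Qm i < length regs \<and> regs ! Qm i = Qsem y i)"

lemma pinv_ext: "pinv y regs Pm Qm j \<Longrightarrow> pinv y (regs @ e) Pm Qm j"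
  unfolding pinv_def by (auto simp: nth_append)

fun pst :: "(int \<Rightarrow> nat) \<Rightarrow> int \<Rightarrow> nat \<Rightarrow> int set \<Rightarrow> (int \<Rightarrow> nat) \<Rightarrow> (int \<Rightarrow> nat) \<Rightarrow> nat
    \<Rightarrow> (int set \<Rightarrow> (int \<Rightarrow> nat) \<Rightarrow> (int \<Rightarrow> nat) \<Rightarrow> nat \<Rightarrow> ctree) \<Rightarrow> ctree" where
  "pst yi j 0 D Pm Qm n k = k D Pm Qm n"
| "pst yi j (Suc r) D Pm Qm n k =
    Cmp (yi j) (yi (j-1))
      (pst yi (j+1) r D (Pm(j := Pm (j-1))) (Qm(j := Qm (j-1))) n k)
      (cmpl (Bin Add (Reg (Pm (j-1))) (Bin Sub (Reg (yi j)) (Reg (yi (j-1))))) n (\<lambda>ip n1.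
       cmpl (Bin Add (Reg (Qm (j-1))) (Bin Mul (Cst (real_of_int j)) (Bin Sub (Reg (yi j)) (Reg (yi (j-1)))))) n1 (\<lambda>iq n2.
       pst yi (j+1) r (insert j D) (Pm(j := ip)) (Qm(j := iq)) n2 k)))"

lemma pst_steps:
  "length regs = n \<Longrightarrow> pinv y regs Pm Qm (j-1) \<Longrightarrow> 2 \<le> j \<Longrightarrow>
   (\<forall>l. j-1 \<le> l \<and> l \<le> j + int r - 1 \<longrightarrow> yi l < n \<and> regs ! yi l = y l) \<Longrightarrow>
   \<exists>ext Pm' Qm' c. pinv y (regs @ ext) Pm' Qm' (j + int r - 1) \<and> c \<le> 7 * r \<and>
     steps (pst yi j r D Pm Qm n k) regs
       (k (D \<union> {l\<in>{j..j + int r - 1}. y (l-1) < y l}) Pm' Qm' (n + length ext)) (regs @ ext) c"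
proof (induction r arbitrary: regs n j D Pm Qm)
  case 0
  then show ?case by (intro exI[of _ "[]"] exI[of _ Pm] exI[of _ Qm] exI[of _ 0]) (auto simp: steps_refl)
next
  case (Suc r)
  have yj: "yi j < n" "regs ! yi j = y j" "yi (j-1) < n" "regs ! yi (j-1) = y (j-1)"
    using Suc.prems(3,4) by auto
  show ?case
  proof (cases "y j \<le> y (j-1)")
    case True
    have c: "steps (pst yi j (Suc r) D Pm Qm n k) regs
       (pst yi (j+1) r D (Pm(j := Pm (j-1))) (Qm(j := Qm (j-1))) n k) regs 1"
      using steps_cmp[of "yi j" "yi (j-1)" _ _ regs] True yj by simp
    have pv: "pinv y regs (Pm(j := Pm (j-1))) (Qm(j := Qm (j-1))) (j + 1 - 1)"
      using Suc.prems(2) True Psem_rec[OF Suc.prems(3), of y] Qsem_rec[OF Suc.prems(3), of y]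
      unfolding pinv_def dsem_def by auto
    obtain ext Pm' Qm' c where h: "pinv y (regs @ ext) Pm' Qm' (j + 1 + int r - 1)" "c \<le> 7 * r"
      "steps (pst yi (j+1) r D (Pm(j := Pm (j-1))) (Qm(j := Qm (j-1))) n k) regs
       (k (D \<union> {l\<in>{j+1..j + 1 + int r - 1}. y (l-1) < y l}) Pm' Qm' (n + length ext)) (regs @ ext) c"
    proof -
      have j2: "2 \<le> j + 1" using Suc.prems(3) by simp
      have yv: "\<forall>l. j + 1 - 1 \<le> l \<and> l \<le> j + 1 + int r - 1 \<longrightarrow> yi l < n \<and> regs ! yi l = y l"
        using Suc.prems(4) by auto
      show ?thesis using Suc.IH[OF Suc.prems(1) pv j2 yv, of D] that by blast
    qed
    have se: "{l\<in>{j+1..j + 1 + int r - 1}. y (l-1) < y l} = {l\<in>{j..j + int (Suc r) - 1}. y (l-1) < y l}"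
      using True by (auto simp: not_less) (metis linorder_not_less order_antisym_conv zle_add1_eq_le)
    show ?thesis using steps_trans[OF c h(3)] h(1,2) se
      by (intro exI[of _ ext] exI[of _ Pm'] exI[of _ Qm'] exI[of _ "1 + c"]) auto
  next
    case False
    let ?e1 = "Bin Add (Reg (Pm (j-1))) (Bin Sub (Reg (yi j)) (Reg (yi (j-1))))"
    let ?e2 = "Bin Add (Reg (Qm (j-1))) (Bin Mul (Cst (real_of_int j)) (Bin Sub (Reg (yi j)) (Reg (yi (j-1)))))"
    let ?k1 = "\<lambda>ip n1. cmpl ?e2 n1 (\<lambda>iq n2. pst yi (j+1) r (insert j D) (Pm(j := ip)) (Qm(j := iq)) n2 k)"
    have c: "steps (pst yi j (Suc r) D Pm Qm n k) regs (cmpl ?e1 n ?k1) regs 1"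
      using steps_cmp[of "yi j" "yi (j-1)" _ _ regs] False yj by simp
    have pm: "Pm (j-1) < n" "regs ! Pm (j-1) = Psem y (j-1)" "Qm (j-1) < n" "regs ! Qm (j-1) = Qsem y (j-1)"
      using Suc.prems(1,2) unfolding pinv_def by auto
    have r1: "rok ?e1 (length regs)" using pm yj Suc.prems(1) by simp
    obtain e1 ip where h1: "ip < length regs + length e1" "(regs @ e1) ! ip = ev ?e1 regs"
      "steps (cmpl ?e1 (length regs) ?k1) regs (?k1 ip (length regs + length e1)) (regs @ e1) (csz ?e1)"
      using comp_steps[OF r1, of ?k1] by blast
    have r2: "rok ?e2 (length (regs @ e1))" using pm yj Suc.prems(1) by simp
    let ?k2 = "\<lambda>iq n2. pst yi (j+1) r (insert j D) (Pm(j := ip)) (Qm(j := iq)) n2 k"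
    obtain e2 iq where h2: "iq < length (regs @ e1) + length e2" "(regs @ e1 @ e2) ! iq = ev ?e2 (regs @ e1)"
      "steps (cmpl ?e2 (length (regs @ e1)) ?k2) (regs @ e1) (?k2 iq (length (regs @ e1) + length e2)) (regs @ e1 @ e2) (csz ?e2)"
      using comp_steps[OF r2, of ?k2] by auto
    have ev1: "ev ?e1 regs = Psem y j" using pm yj Psem_rec[OF Suc.prems(3), of y] False
      by (simp add: dsem_def)
    have ev2: "ev ?e2 (regs @ e1) = Qsem y j" using pm yj Qsem_rec[OF Suc.prems(3), of y] False Suc.prems(1)
      by (simp add: dsem_def nth_append)
    have pv: "pinv y (regs @ e1 @ e2) (Pm(j := ip)) (Qm(j := iq)) (j + 1 - 1)"
    proof -
      have "pinv y (regs @ e1 @ e2) Pm Qm (j-1)" using pinv_ext[OF Suc.prems(2)] by simp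
      moreover have "(regs @ e1 @ e2) ! ip = Psem y j" using h1(1,2) ev1
        by (metis append_assoc length_append nth_append_left)
      ultimately show ?thesis using h1(1) h2 ev2 unfolding pinv_def
        by (auto simp: not_le)
    qed
    have yv: "\<forall>l. j + 1 - 1 \<le> l \<and> l \<le> j + 1 + int r - 1 \<longrightarrow> yi l < length (regs @ e1 @ e2) \<and> (regs @ e1 @ e2) ! yi l = y l"
    proof (intro allI impI)
      fix l assume "j + 1 - 1 \<le> l \<and> l \<le> j + 1 + int r - 1"
      then have "yi l < n \<and> regs ! yi l = y l" using Suc.prems(4) by auto
      then show "yi l < length (regs @ e1 @ e2) \<and> (regs @ e1 @ e2) ! yi l = y l"
        using Suc.prems(1) by (auto simp: nth_append)
    qed
    obtain ext Pm' Qm' c3 where h3: "pinv y ((regs @ e1 @ e2) @ ext) Pm' Qm' (j + 1 + int r - 1)" "c3 \<le> 7 * r"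
      "steps (pst yi (j+1) r (insert j D) (Pm(j := ip)) (Qm(j := iq)) (length (regs @ e1 @ e2)) k) (regs @ e1 @ e2)
       (k (insert j D \<union> {l\<in>{j+1..j + 1 + int r - 1}. y (l-1) < y l}) Pm' Qm' (length (regs @ e1 @ e2) + length ext)) ((regs @ e1 @ e2) @ ext) c3"
    proof -
      have j2: "2 \<le> j + 1" using Suc.prems(3) by simp
      show ?thesis using Suc.IH[OF refl pv j2 yv, of "insert j D"] that by blast
    qed
    have se: "insert j D \<union> {l\<in>{j+1..j + 1 + int r - 1}. y (l-1) < y l} = D \<union> {l\<in>{j..j + int (Suc r) - 1}. y (l-1) < y l}"
      using False by auto
    have s12: "steps (pst yi j (Suc r) D Pm Qm n k) regs
      (pst yi (j+1) r (insert j D) (Pm(j := ip)) (Qm(j := iq)) (length (regs @ e1 @ e2)) k) (regs @ e1 @ e2) (1 + csz ?e1 + csz ?e2)"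
    proof -
      have sA: "steps (pst yi j (Suc r) D Pm Qm n k) regs (cmpl ?e2 (length (regs @ e1)) ?k2) (regs @ e1) (1 + csz ?e1)"
        using steps_trans[OF c h1(3)[unfolded Suc.prems(1)]] Suc.prems(1) by simp
      show ?thesis using steps_trans[OF sA h2(3)] by (simp add: add.assoc)
    qed
    show ?thesis using steps_trans[OF s12 h3(3)] h3(1,2) se Suc.prems(1)
      by (intro exI[of _ "e1 @ e2 @ ext"] exI[of _ Pm'] exI[of _ Qm'] exI[of _ "1 + csz ?e1 + csz ?e2 + c3"]) (auto simp: add.assoc)
  qed
qed

fun tlp :: "(int \<Rightarrow> nat \<Rightarrow> (nat \<Rightarrow> nat \<Rightarrow> nat \<Rightarrow> ctree) \<Rightarrow> ctree) \<Rightarrow> int \<Rightarrow> nat \<Rightarrow> int \<Rightarrow> nat \<Rightarrow> nat \<Rightarrow> nat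
    \<Rightarrow> (int \<Rightarrow> nat \<Rightarrow> ctree) \<Rightarrow> ctree" where
  "tlp vb t 0 b ib ie n fin = fin b ie"
| "tlp vb t (Suc r) b ib ie n fin =
     vb t n (\<lambda>iv ie' n'. Cmp iv ib (tlp vb (t+1) r b ib ie n' fin) (tlp vb (t+1) r t iv ie' n' fin))"

definition vbspec :: "(int \<Rightarrow> nat \<Rightarrow> (nat \<Rightarrow> nat \<Rightarrow> nat \<Rightarrow> ctree) \<Rightarrow> ctree) \<Rightarrow> real list \<Rightarrow> int \<Rightarrow> int
   \<Rightarrow> (int \<Rightarrow> real) \<Rightarrow> (int \<Rightarrow> real) \<Rightarrow> nat \<Rightarrow> bool" where
  "vbspec vb R0 t1 t2 vs es cb \<longleftrightarrow> (\<forall>e k t. t1 \<le> t \<and> t \<le> t2 \<longrightarrow> (\<exists>e' iv ie c.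
     iv < length (R0 @ e @ e') \<and> ie < length (R0 @ e @ e') \<and> (R0 @ e @ e') ! iv = vs t
     \<and> (R0 @ e @ e') ! ie = es t \<and> c \<le> cb
     \<and> steps (vb t (length (R0 @ e)) k) (R0 @ e) (k iv ie (length (R0 @ e @ e'))) (R0 @ e @ e') c))"

lemma tlp_steps:
  assumes vbs: "vbspec vb R0 t1 t2 vs es cb"
  shows "ib < length (R0 @ e) \<Longrightarrow> ie < length (R0 @ e) \<Longrightarrow> (R0 @ e) ! ib = vs b \<Longrightarrow> (R0 @ e) ! ie = es b
    \<Longrightarrow> t1 \<le> b \<Longrightarrow> b < t \<Longrightarrow> (\<forall>t'. t1 \<le> t' \<and> t' < t \<longrightarrow> vs t' \<le> vs b) \<Longrightarrow> t + int r - 1 \<le> t2 \<Longrightarrow>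
    \<exists>e' b' ie' c. steps (tlp vb t r b ib ie (length (R0 @ e)) fin) (R0 @ e) (fin b' ie') (R0 @ e') c
      \<and> c \<le> r * (cb + 1) \<and> t1 \<le> b' \<and> b' < t + int r \<and> (\<forall>t'. t1 \<le> t' \<and> t' < t + int r \<longrightarrow> vs t' \<le> vs b')
      \<and> ie' < length (R0 @ e') \<and> (R0 @ e') ! ie' = es b'"
proof (induction r arbitrary: e t b ib ie)
  case 0
  then show ?case by (intro exI[of _ e] exI[of _ b] exI[of _ ie] exI[of _ 0]) (auto simp: steps_refl)
next
  case (Suc r)
  let ?k = "\<lambda>iv ie' n'. Cmp iv ib (tlp vb (t+1) r b ib ie n' fin) (tlp vb (t+1) r t iv ie' n' fin)"
  have tt: "t1 \<le> t" "t \<le> t2" using Suc.prems by auto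
  obtain e' iv ie2 c where h: "iv < length (R0 @ e @ e')" "ie2 < length (R0 @ e @ e')" "(R0 @ e @ e') ! iv = vs t"
     "(R0 @ e @ e') ! ie2 = es t" "c \<le> cb"
     "steps (vb t (length (R0 @ e)) ?k) (R0 @ e) (?k iv ie2 (length (R0 @ e @ e'))) (R0 @ e @ e') c"
    using vbs tt unfolding vbspec_def by blast
  have s1: "steps (tlp vb t (Suc r) b ib ie (length (R0 @ e)) fin) (R0 @ e) (?k iv ie2 (length (R0 @ e @ e'))) (R0 @ e @ e') c"
    using h(6) by simp
  have ibv: "(R0 @ e @ e') ! ib = vs b" "(R0 @ e @ e') ! ie = es b" "ib < length (R0 @ (e @ e'))" "ie < length (R0 @ (e @ e'))"
    using Suc.prems(1-4) by (auto simp: nth_append)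
  show ?case
  proof (cases "vs t \<le> vs b")
    case True
    have s2: "steps (?k iv ie2 (length (R0 @ e @ e'))) (R0 @ e @ e') (tlp vb (t+1) r b ib ie (length (R0 @ (e @ e'))) fin) (R0 @ (e @ e')) 1"
      using steps_cmp[of iv ib _ _ "R0 @ e @ e'"] h(3) ibv True by simp
    have pr: "\<forall>t'. t1 \<le> t' \<and> t' < t + 1 \<longrightarrow> vs t' \<le> vs b" using Suc.prems(7) True
      by (metis zle_add1_eq_le order_le_less)
    obtain e2 b' ie' c' where r: "steps (tlp vb (t+1) r b ib ie (length (R0 @ (e @ e'))) fin) (R0 @ (e @ e')) (fin b' ie') (R0 @ e2) c'"
      "c' \<le> r * (cb + 1)" "t1 \<le> b'" "b' < t + 1 + int r" "(\<forall>t'. t1 \<le> t' \<and> t' < t + 1 + int r \<longrightarrow> vs t' \<le> vs b')"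
      "ie' < length (R0 @ e2)" "(R0 @ e2) ! ie' = es b'"
    proof -
      have a1: "b < t + 1" "t + 1 + int r - 1 \<le> t2" using Suc.prems(6,8) by auto
      show ?thesis using Suc.IH[OF ibv(3,4,1,2) Suc.prems(5) a1(1) pr a1(2)] that by blast
    qed
    show ?thesis using steps_trans[OF steps_trans[OF s1 s2] r(1)] r(2-7) h(5)
      by (intro exI[of _ e2] exI[of _ b'] exI[of _ ie'] exI[of _ "c + 1 + c'"]) (auto simp: add_ac)
  next
    case False
    have s2: "steps (?k iv ie2 (length (R0 @ e @ e'))) (R0 @ e @ e') (tlp vb (t+1) r t iv ie2 (length (R0 @ (e @ e'))) fin) (R0 @ (e @ e')) 1"
      using steps_cmp[of iv ib _ _ "R0 @ e @ e'"] h(3) ibv False by simp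
    have pr: "\<forall>t'. t1 \<le> t' \<and> t' < t + 1 \<longrightarrow> vs t' \<le> vs t" using Suc.prems(7) False
      by (smt (verit, best) zle_add1_eq_le)
    have hh: "iv < length (R0 @ (e @ e'))" "ie2 < length (R0 @ (e @ e'))" "(R0 @ (e @ e')) ! iv = vs t" "(R0 @ (e @ e')) ! ie2 = es t"
      using h by auto
    obtain e2 b' ie' c' where r: "steps (tlp vb (t+1) r t iv ie2 (length (R0 @ (e @ e'))) fin) (R0 @ (e @ e')) (fin b' ie') (R0 @ e2) c'"
      "c' \<le> r * (cb + 1)" "t1 \<le> b'" "b' < t + 1 + int r" "(\<forall>t'. t1 \<le> t' \<and> t' < t + 1 + int r \<longrightarrow> vs t' \<le> vs b')"
      "ie' < length (R0 @ e2)" "(R0 @ e2) ! ie' = es b'"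
    proof -
      have a1: "t < t + 1" "t + 1 + int r - 1 \<le> t2" using Suc.prems(8) by auto
      show ?thesis using Suc.IH[OF hh tt(1) a1(1) pr a1(2)] that by blast
    qed
    show ?thesis using steps_trans[OF steps_trans[OF s1 s2] r(1)] r(2-7) h(5)
      by (intro exI[of _ e2] exI[of _ b'] exI[of _ ie'] exI[of _ "c + 1 + c'"]) (auto simp: add_ac)
  qed
qed


definition Sopt :: "int set \<Rightarrow> int \<Rightarrow> int \<Rightarrow> int \<Rightarrow> int set" where
  "Sopt D lo K t = {s\<in>{lo..min K (t-2)}. t - s \<in> D}"

lemma sum_split_int:
  fixes f :: "int \<Rightarrow> real"
  assumes "2 \<le> m" "m \<le> h + 1"
  shows "(\<Sum>l\<in>{m..h}. f l) = (\<Sum>l\<in>{2..h}. f l) - (\<Sum>l\<in>{2..m-1}. f l)"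
proof -
  have "{2..h} = {2..m-1} \<union> {m..h}" using assms by auto
  moreover have "{2..m-1} \<inter> {m..h} = {}" by auto
  ultimately have "(\<Sum>l\<in>{2..h}. f l) = (\<Sum>l\<in>{2..m-1}. f l) + (\<Sum>l\<in>{m..h}. f l)"
    by (simp add: sum.union_disjoint)
  then show ?thesis by simp
qed

lemma bsum_Sopt:
  fixes y :: "int \<Rightarrow> real" and K t lo T :: int
  assumes D: "D = {l\<in>{2..T}. y (l-1) < y l}" and t: "t \<le> T" and lo: "0 \<le> lo"
  defines "Kt \<equiv> min K (t-2)"
  defines "hi \<equiv> t - lo"
  defines "lw \<equiv> (if Kt < lo then hi else t - Kt - 1)"
  shows "bsum Cb Vb V y (Sopt D lo K t) t
     = (Cb - Vb - real_of_int t * V) * (Psem y hi - Psem y lw) + V * (Qsem y hi - Qsem y lw)"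
proof (cases "Kt < lo")
  case True
  then have "Sopt D lo K t = {}" unfolding Sopt_def Kt_def by auto
  then show ?thesis using True unfolding bsum_def lw_def by simp
next
  case False
  let ?w = "\<lambda>s. Cb - Vb - real_of_int s * V"
  have "bsum Cb Vb V y (Sopt D lo K t) t = (\<Sum>s\<in>{lo..Kt}. if t - s \<in> D then ?w s * (y (t-s) - y (t-s-1)) else 0)"
    unfolding bsum_def Sopt_def Kt_def by (rule sum.inter_filter) simp
  also have "\<dots> = (\<Sum>s\<in>{lo..Kt}. ?w s * dsem y (t-s))"
  proof (rule sum.cong[OF refl])
    fix s assume "s \<in> {lo..Kt}"
    then have "2 \<le> t - s" "t - s \<le> T" using t lo unfolding Kt_def by auto
    then show "(if t - s \<in> D then ?w s * (y (t-s) - y (t-s-1)) else 0) = ?w s * dsem y (t-s)"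
      unfolding D dsem_def by auto
  qed
  also have "\<dots> = (\<Sum>l\<in>{t-Kt..hi}. ?w (t - l) * dsem y l)"
    by (rule sum.reindex_bij_witness[of _ "\<lambda>l. t - l" "\<lambda>s. t - s"]) (auto simp: hi_def)
  also have "\<dots> = (\<Sum>l\<in>{t-Kt..hi}. (Cb - Vb - real_of_int t * V) * dsem y l + V * (real_of_int l * dsem y l))"
    by (rule sum.cong[OF refl]) (simp add: algebra_simps)
  also have "\<dots> = (Cb - Vb - real_of_int t * V) * (\<Sum>l\<in>{t-Kt..hi}. dsem y l) + V * (\<Sum>l\<in>{t-Kt..hi}. real_of_int l * dsem y l)"
    by (simp add: sum.distrib sum_distrib_left)
  also have "\<dots> = (Cb - Vb - real_of_int t * V) * (Psem y hi - Psem y lw) + V * (Qsem y hi - Qsem y lw)"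
  proof -
    have m: "2 \<le> t - Kt" "t - Kt \<le> hi + 1" using False unfolding Kt_def hi_def by auto
    have lw: "lw = t - Kt - 1" using False unfolding lw_def by simp
    show ?thesis unfolding Psem_def Qsem_def lw
      using sum_split_int[OF m, of "dsem y"] sum_split_int[OF m, of "\<lambda>l. real_of_int l * dsem y l"] by simp
  qed
  finally show ?thesis .
qed

lemma bsum_le_Sopt:
  fixes y :: "int \<Rightarrow> real"
  assumes D: "D = {l\<in>{2..T}. y (l-1) < y l}" and t: "t \<le> T" and lo: "0 \<le> lo"
    and V: "V > 0" and Ks: "K \<le> \<lfloor>(Cb - Vb) / V\<rfloor>"
    and S: "S \<subseteq> {lo..K}" "\<forall>s\<in>S. s + 2 \<le> t"
  shows "bsum Cb Vb V y S t \<le> bsum Cb Vb V y (Sopt D lo K t) t"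
proof -
  let ?w = "\<lambda>s. Cb - Vb - real_of_int s * V"
  let ?R = "{lo..min K (t-2)}"
  have wpos: "?w s \<ge> 0" if "s \<le> K" for s
  proof -
    have "real_of_int s \<le> (Cb - Vb) / V" using that Ks le_floor_iff by (metis order_trans)
    then have "real_of_int s * V \<le> Cb - Vb" using V by (simp add: pos_le_divide_eq)
    then show ?thesis by simp
  qed
  have SR: "S \<subseteq> ?R" using S(1) S(2) by (force simp: subset_iff)
  have "bsum Cb Vb V y S t \<le> (\<Sum>s\<in>S. ?w s * dsem y (t-s))"
    unfolding bsum_def
  proof (rule sum_mono)
    fix s assume "s \<in> S"
    then have "?w s \<ge> 0" using wpos S by auto
    moreover have "y (t-s) - y (t-s-1) \<le> dsem y (t-s)" unfolding dsem_def by auto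
    ultimately show "?w s * (y (t-s) - y (t-s-1)) \<le> ?w s * dsem y (t-s)" by (rule mult_left_mono[rotated])
  qed
  also have "\<dots> \<le> (\<Sum>s\<in>?R. ?w s * dsem y (t-s))"
    by (rule sum_mono2[OF _ SR]) (auto intro!: mult_nonneg_nonneg wpos simp: dsem_def)
  also have "\<dots> = bsum Cb Vb V y (Sopt D lo K t) t"
  proof -
    have "bsum Cb Vb V y (Sopt D lo K t) t = (\<Sum>s\<in>?R. if t - s \<in> D then ?w s * (y (t-s) - y (t-s-1)) else 0)"
      unfolding bsum_def Sopt_def by (rule sum.inter_filter) simp
    also have "\<dots> = (\<Sum>s\<in>?R. ?w s * dsem y (t-s))"
    proof (rule sum.cong[OF refl])
      fix s assume "s \<in> ?R"
      then have "2 \<le> t - s" "t - s \<le> T" using t lo by auto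
      then show "(if t - s \<in> D then ?w s * (y (t-s) - y (t-s-1)) else 0) = ?w s * dsem y (t-s)"
        unfolding D dsem_def by auto
    qed
    finally show ?thesis by simp
  qed
  finally show ?thesis .
qed


definition Bexp :: "(int \<Rightarrow> nat) \<Rightarrow> int \<Rightarrow> int \<Rightarrow> int \<Rightarrow> expr" where
  "Bexp yi f g t = Bin Mul (Reg 2) (Bin Sub (Reg (yi (t+f))) (Reg (yi (t+g))))"
definition Aexp :: "(int \<Rightarrow> nat) \<Rightarrow> (int \<Rightarrow> nat) \<Rightarrow> nat \<Rightarrow> int \<Rightarrow> int \<Rightarrow> expr" where
  "Aexp xi yi pix e t = Bin Sub (Reg (xi t)) (Bin Add (Bin Mul (Reg pix) (Reg (yi t)))
      (Bin Mul (Bin Sub (Reg 0) (Reg pix)) (Reg (yi (t+e)))))"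
definition lwof :: "int \<Rightarrow> int \<Rightarrow> int \<Rightarrow> int" where
  "lwof lo K t = (if min K (t-2) < lo then t - lo else t - min K (t-2) - 1)"
definition BSexp :: "nat \<Rightarrow> (int \<Rightarrow> nat) \<Rightarrow> (int \<Rightarrow> nat) \<Rightarrow> int \<Rightarrow> int \<Rightarrow> int \<Rightarrow> expr" where
  "BSexp ia Pm Qm lo K t = Bin Add (Bin Mul (Bin Sub (Reg ia) (Bin Mul (Cst (real_of_int t)) (Reg 2)))
      (Bin Sub (Reg (Pm (t-lo))) (Reg (Pm (lwof lo K t)))))
      (Bin Mul (Reg 2) (Bin Sub (Reg (Qm (t-lo))) (Reg (Qm (lwof lo K t)))))"
definition vbt :: "(int \<Rightarrow> nat) \<Rightarrow> (int \<Rightarrow> nat) \<Rightarrow> nat \<Rightarrow> int \<Rightarrow> int \<Rightarrow> int \<Rightarrow> int \<Rightarrow> int \<Rightarrow> nat \<Rightarrow> nat \<Rightarrow> nat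
    \<Rightarrow> (int \<Rightarrow> nat) \<Rightarrow> (int \<Rightarrow> nat) \<Rightarrow> int \<Rightarrow> nat \<Rightarrow> (nat \<Rightarrow> nat \<Rightarrow> nat \<Rightarrow> ctree) \<Rightarrow> ctree" where
  "vbt xi yi pix e f g lo K z ia iE Pm Qm t n k =
     cmpl (Bexp yi f g t) n (\<lambda>ib n1. sel z ib z z iE n1 (\<lambda>ie n2.
       cmpl (Bin Add (Bin Add (Aexp xi yi pix e t) (Bin Mul (Reg ie) (Reg ib))) (BSexp ia Pm Qm lo K t)) n2
         (\<lambda>iv n3. k iv ie n3)))"

definition BSv :: "real \<Rightarrow> real \<Rightarrow> real \<Rightarrow> (int \<Rightarrow> real) \<Rightarrow> int \<Rightarrow> int \<Rightarrow> int \<Rightarrow> real" where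
  "BSv Cb Vb V y lo K t = (Cb - Vb - real_of_int t * V) * (Psem y (t-lo) - Psem y (lwof lo K t))
      + V * (Qsem y (t-lo) - Qsem y (lwof lo K t))"

lemma lwof_le: "lwof lo K t \<le> t - lo" unfolding lwof_def by auto

lemma vbt_spec:
  fixes R0 :: "real list" and x y :: "int \<Rightarrow> real"
  assumes len: "4 \<le> length R0" "pix < 4" "z < length R0" "ia < length R0" "iE < length R0"
    and r0: "R0 ! 0 = Cb" "R0 ! 2 = V" "R0 ! pix = P" "R0 ! z = 0" "R0 ! ia = Cb - Vb" "R0 ! iE = E"
    and xy: "\<forall>l. 1 \<le> l \<and> l \<le> T \<longrightarrow> xi l < length R0 \<and> R0 ! xi l = x l \<and> yi l < length R0 \<and> R0 ! yi l = y l"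
    and pv: "pinv y R0 Pm Qm T"
    and rng: "\<forall>t. t1 \<le> t \<and> t \<le> t2 \<longrightarrow> 1 \<le> t \<and> t \<le> T \<and> 1 \<le> t + e \<and> t + e \<le> T
        \<and> 1 \<le> t + f \<and> t + f \<le> T \<and> 1 \<le> t + g \<and> t + g \<le> T"
    and lo: "0 \<le> lo"
  shows "vbspec (vbt xi yi pix e f g lo K z ia iE Pm Qm) R0 t1 t2
     (\<lambda>t. (x t - (P * y t + (Cb - P) * y (t+e))) + (if V * (y (t+f) - y (t+g)) \<le> 0 then 0 else E) * (V * (y (t+f) - y (t+g)))
          + BSv Cb Vb V y lo K t)
     (\<lambda>t. if V * (y (t+f) - y (t+g)) \<le> 0 then 0 else E) 20"
  unfolding vbspec_def
proof (intro allI impI)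
  fix ex :: "real list" and k t
  assume tt: "t1 \<le> t \<and> t \<le> t2"
  let ?R = "R0 @ ex"
  have RR: "\<And>i. i < length R0 \<Longrightarrow> ?R ! i = R0 ! i" by (simp add: nth_append_left)
  have rt: "1 \<le> t" "t \<le> T" "1 \<le> t + e" "t + e \<le> T" "1 \<le> t + f" "t + f \<le> T" "1 \<le> t + g" "t + g \<le> T"
    using rng tt by auto
  have xt: "xi t < length R0" "R0 ! xi t = x t" "yi t < length R0" "R0 ! yi t = y t" using xy rt by auto
  have ye: "yi (t+e) < length R0" "R0 ! yi (t+e) = y (t+e)" using xy rt by auto
  have yf: "yi (t+f) < length R0" "R0 ! yi (t+f) = y (t+f)" using xy rt by auto
  have yg: "yi (t+g) < length R0" "R0 ! yi (t+g) = y (t+g)" using xy rt by auto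
  have hl: "t - lo \<le> T" "lwof lo K t \<le> T" using rt lo lwof_le[of lo K t] by auto
  have pq: "Pm (t-lo) < length R0" "R0 ! Pm (t-lo) = Psem y (t-lo)" "Qm (t-lo) < length R0" "R0 ! Qm (t-lo) = Qsem y (t-lo)"
    "Pm (lwof lo K t) < length R0" "R0 ! Pm (lwof lo K t) = Psem y (lwof lo K t)"
    "Qm (lwof lo K t) < length R0" "R0 ! Qm (lwof lo K t) = Qsem y (lwof lo K t)"
    using pv hl unfolding pinv_def by auto
  let ?B = "V * (y (t+f) - y (t+g))"
  let ?es = "if ?B \<le> 0 then 0 else E"
  let ?vexp = "\<lambda>ib ie. Bin Add (Bin Add (Aexp xi yi pix e t) (Bin Mul (Reg ie) (Reg ib))) (BSexp ia Pm Qm lo K t)"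
  let ?k1 = "\<lambda>ib n1. sel z ib z z iE n1 (\<lambda>ie n2. cmpl (?vexp ib ie) n2 (\<lambda>iv n3. k iv ie n3))"
  have rB: "rok (Bexp yi f g t) (length ?R)" using yf yg len unfolding Bexp_def by simp
  obtain e1 ib where h1: "ib < length ?R + length e1" "(?R @ e1) ! ib = ev (Bexp yi f g t) ?R"
    "steps (cmpl (Bexp yi f g t) (length ?R) ?k1) ?R (?k1 ib (length ?R + length e1)) (?R @ e1) (csz (Bexp yi f g t))"
    using comp_steps[OF rB, of ?k1] by blast
  have evB: "ev (Bexp yi f g t) ?R = ?B" unfolding Bexp_def using yf yg len r0 by (simp add: RR)
  let ?R1 = "?R @ e1"
  have R1: "\<And>i. i < length R0 \<Longrightarrow> ?R1 ! i = R0 ! i" by (simp add: nth_append_left)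
  let ?k2 = "\<lambda>ie n2. cmpl (?vexp ib ie) n2 (\<lambda>iv n3. k iv ie n3)"
  obtain e2 ie where h2: "ie < length ?R1 + length e2" "(?R1 @ e2) ! ie = (if ?R1 ! ib \<le> ?R1 ! z then ?R1 ! z else ?R1 ! iE)"
    "steps (sel z ib z z iE (length ?R1) ?k2) ?R1 (?k2 ie (length ?R1 + length e2)) (?R1 @ e2) 2"
    using sel_steps[of ?R1 "length ?R1" z ib z z iE ?k2] len r0 h1(1) R1 by auto
  have ibv: "?R1 ! ib = ?B" using h1(2) evB by simp
  have iev: "(?R1 @ e2) ! ie = ?es" using h2(2) ibv R1 len r0 by simp
  let ?R2 = "?R1 @ e2"
  have R2: "\<And>i. i < length R0 \<Longrightarrow> (R0 @ ex @ e1 @ e2) ! i = R0 ! i" by (simp add: nth_append)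
  have ib2: "?R2 ! ib = ?B" "ib < length ?R2" using ibv h1(1) nth_append_left[of ib ?R1 e2] by auto
  have rv: "rok (?vexp ib ie) (length ?R2)"
    using len xt ye pq h1(1) h2(1) unfolding Aexp_def BSexp_def by auto
  obtain e3 iv where h3: "iv < length ?R2 + length e3" "(?R2 @ e3) ! iv = ev (?vexp ib ie) ?R2"
    "steps (cmpl (?vexp ib ie) (length ?R2) (\<lambda>iv n3. k iv ie n3)) ?R2 (k iv ie (length ?R2 + length e3)) (?R2 @ e3) (csz (?vexp ib ie))"
    using comp_steps[OF rv, of "\<lambda>iv n3. k iv ie n3"] by blast
  have evv: "ev (?vexp ib ie) ?R2 = (x t - (P * y t + (Cb - P) * y (t+e))) + ?es * ?B + BSv Cb Vb V y lo K t"
  proof -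
    have "0 < length R0" "2 < length R0" "pix < length R0" using len by auto
    then show ?thesis unfolding Aexp_def BSexp_def BSv_def using len xt ye pq r0 iev ib2 by (simp add: R2)
  qed
  have s12: "steps (vbt xi yi pix e f g lo K z ia iE Pm Qm t (length ?R) k) ?R (cmpl (?vexp ib ie) (length ?R2) (\<lambda>iv n3. k iv ie n3)) ?R2 (csz (Bexp yi f g t) + 2)"
  proof -
    have sA: "steps (vbt xi yi pix e f g lo K z ia iE Pm Qm t (length ?R) k) ?R (sel z ib z z iE (length ?R1) ?k2) ?R1 (csz (Bexp yi f g t))"
      using h1(3) unfolding vbt_def by (simp only: length_append)
    have sB: "steps (sel z ib z z iE (length ?R1) ?k2) ?R1 (cmpl (?vexp ib ie) (length ?R2) (\<lambda>iv n3. k iv ie n3)) ?R2 2"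
      using h2(3) by (simp only: length_append)
    show ?thesis using steps_trans[OF sA sB] by simp
  qed
  have s123: "steps (vbt xi yi pix e f g lo K z ia iE Pm Qm t (length ?R) k) ?R (k iv ie (length ?R2 + length e3)) (?R2 @ e3)
      (csz (Bexp yi f g t) + 2 + csz (?vexp ib ie))"
    using steps_trans[OF s12 h3(3)] by (simp only:)
  have cs: "csz (Bexp yi f g t) + 2 + csz (?vexp ib ie) \<le> 20" unfolding Bexp_def Aexp_def BSexp_def by simp
  show "\<exists>e' iv ie c. iv < length (R0 @ ex @ e') \<and> ie < length (R0 @ ex @ e') \<and>
         (R0 @ ex @ e') ! iv = (x t - (P * y t + (Cb - P) * y (t+e))) + ?es * ?B + BSv Cb Vb V y lo K t \<and>
         (R0 @ ex @ e') ! ie = ?es \<and> c \<le> 20 \<and>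
         steps (vbt xi yi pix e f g lo K z ia iE Pm Qm t (length (R0 @ ex)) k) (R0 @ ex) (k iv ie (length (R0 @ ex @ e'))) (R0 @ ex @ e') c"
    apply (rule exI[of _ "e1 @ e2 @ e3"], rule exI[of _ iv], rule exI[of _ ie], rule exI[of _ "csz (Bexp yi f g t) + 2 + csz (?vexp ib ie)"])
    apply (intro conjI)
    using h3(1) apply simp
    using h2(1) apply simp
    using h3(2) evv apply simp
    using iev h2(1) nth_append_left[of ie "R0 @ ex @ e1 @ e2" e3] apply simp
    using cs apply simp
    using s123 by (simp only: length_append add.assoc append_assoc)
qed


definition stage8 :: "(int \<Rightarrow> nat) \<Rightarrow> (int \<Rightarrow> nat) \<Rightarrow> nat \<Rightarrow> int \<Rightarrow> int \<Rightarrow> int \<Rightarrow> int \<Rightarrow> int \<Rightarrow> int \<Rightarrow> (int \<Rightarrow> int)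
   \<Rightarrow> nat \<Rightarrow> nat \<Rightarrow> nat \<Rightarrow> int \<Rightarrow> int set \<Rightarrow> (int \<Rightarrow> nat) \<Rightarrow> (int \<Rightarrow> nat) \<Rightarrow> nat \<Rightarrow> ctree" where
  "stage8 xi yi pix e f g lo t1 t2 tmap z ia iE K D Pm Qm n7 =
    (if t1 \<le> t2 then vbt xi yi pix e f g lo K z ia iE Pm Qm t1 n7 (\<lambda>iv ie n8.
      tlp (vbt xi yi pix e f g lo K z ia iE Pm Qm) (t1+1) (nat (t2-t1)) t1 iv ie n8
        (\<lambda>b ie'. Leaf (Sopt D lo K b) (tmap b) ie'))
     else Leaf {} 0 0)"

definition gtree :: "int \<Rightarrow> nat \<Rightarrow> (int \<Rightarrow> nat) \<Rightarrow> (int \<Rightarrow> nat) \<Rightarrow> nat \<Rightarrow> int \<Rightarrow> int \<Rightarrow> int \<Rightarrow> int \<Rightarrow> int \<Rightarrow> int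
   \<Rightarrow> int \<Rightarrow> int \<Rightarrow> (int \<Rightarrow> int) \<Rightarrow> ctree" where
  "gtree T n0 xi yi pix e f g lo M Le t1 t2 tmap =
    Const 0 (Op Sub 0 3 (Op Div (Suc n0) 2 (Const (real_of_int Le)
     (sel n0 (n0+3) (n0+2) (n0+3) (n0+2) (n0+4) (\<lambda>iE n5.
       ksc (n0+2) (nat M) 1 (min M 0) n5 (\<lambda>K n6.
        pst yi 2 (nat (T-1)) {} (\<lambda>_. n0) (\<lambda>_. n0) n6 (\<lambda>D Pm Qm n7.
          stage8 xi yi pix e f g lo t1 t2 tmap n0 (Suc n0) iE K D Pm Qm n7)))))))"

definition Gfam :: "int \<Rightarrow> int \<Rightarrow> int \<Rightarrow> int \<Rightarrow> int \<Rightarrow> real \<Rightarrow> real \<Rightarrow> real \<Rightarrow> ineq set" where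
  "Gfam lo M Le t1 t2 Cb Vb V = {(S, t, \<eta>). S \<subseteq> {lo..min M (sigma Cb Vb V)} \<and> 0 \<le> \<eta>
     \<and> \<eta> \<le> min (real_of_int Le) ((Cb - Vb) / V) \<and> t1 \<le> t \<and> t \<le> t2 \<and> (\<forall>s\<in>S. s + 2 \<le> t)}"

fun Gviol :: "real \<Rightarrow> int \<Rightarrow> int \<Rightarrow> int \<Rightarrow> real \<Rightarrow> real \<Rightarrow> real \<Rightarrow> (int \<Rightarrow> real) \<Rightarrow> (int \<Rightarrow> real) \<Rightarrow> ineq \<Rightarrow> real" where
  "Gviol P e f g Cb Vb V x y (S, t, \<eta>) =
     x t - (P * y t + (Cb - P) * y (t+e)) + \<eta> * (V * (y (t+f) - y (t+g))) + bsum Cb Vb V y S t"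

lemma gen_main:
  fixes regs :: "real list" and x y :: "int \<Rightarrow> real"
  assumes len: "length regs = n0" "4 \<le> n0" "pix < 4"
    and r0: "regs ! 0 = Cb" "regs ! 2 = V" "regs ! 3 = Vb" "regs ! pix = P"
    and xy: "\<forall>l. 1 \<le> l \<and> l \<le> T \<longrightarrow> xi l < n0 \<and> regs ! xi l = x l \<and> yi l < n0 \<and> regs ! yi l = y l"
    and T: "1 \<le> T"
    and par: "V > 0" "V \<le> Cb - Vb" "0 \<le> Le" "0 \<le> lo" "M \<le> T"
    and rng: "\<forall>t. t1 \<le> t \<and> t \<le> t2 \<longrightarrow> 1 \<le> t \<and> t \<le> T \<and> 1 \<le> t + e \<and> t + e \<le> T
        \<and> 1 \<le> t + f \<and> t + f \<le> T \<and> 1 \<le> t + g \<and> t + g \<le> T"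
  shows "snd (run (gtree T n0 xi yi pix e f g lo M Le t1 t2 tmap) regs) \<le> 40 * nat T
    \<and> (t1 \<le> t2 \<longrightarrow> (\<exists>S t \<eta>. fst (run (gtree T n0 xi yi pix e f g lo M Le t1 t2 tmap) regs) = (S, tmap t, \<eta>)
         \<and> (S, t, \<eta>) \<in> Gfam lo M Le t1 t2 Cb Vb V
         \<and> (\<forall>gq\<in>Gfam lo M Le t1 t2 Cb Vb V. Gviol P e f g Cb Vb V x y gq \<le> Gviol P e f g Cb Vb V x y (S, t, \<eta>))))"
proof -
  define q where "q = (Cb - Vb) / V"
  define E where "E = min (real_of_int Le) q"
  have q1: "1 \<le> q" using par unfolding q_def by (simp add: le_divide_eq)
  define R1 where "R1 = regs @ [0, Cb - Vb, q, real_of_int Le]"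
  have lR1: "length R1 = n0 + 4" unfolding R1_def using len by simp
  have R1v: "R1 ! n0 = 0" "R1 ! (Suc n0) = Cb - Vb" "R1 ! (n0+2) = q" "R1 ! (n0+3) = real_of_int Le"
    unfolding R1_def using len by (auto simp: nth_append)
  have R1r: "\<And>i. i < n0 \<Longrightarrow> R1 ! i = regs ! i" unfolding R1_def using len by (simp add: nth_append)
  let ?k5 = "\<lambda>iE n5. ksc (n0+2) (nat M) 1 (min M 0) n5 (\<lambda>K n6.
        pst yi 2 (nat (T-1)) {} (\<lambda>_. n0) (\<lambda>_. n0) n6 (\<lambda>D Pm Qm n7.
          stage8 xi yi pix e f g lo t1 t2 tmap n0 (Suc n0) iE K D Pm Qm n7))"
  have st1: "steps (gtree T n0 xi yi pix e f g lo M Le t1 t2 tmap) regs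
     (sel n0 (n0+3) (n0+2) (n0+3) (n0+2) (n0+4) ?k5) R1 4"
    unfolding gtree_def steps_def R1_def q_def using len r0 by (simp add: Let_def nth_append)
  obtain e5 iE where h5: "iE < n0 + 4 + length e5" "(R1 @ e5) ! iE = (if R1 ! (n0+3) \<le> R1 ! (n0+2) then R1 ! (n0+3) else R1 ! (n0+2))"
    "steps (sel n0 (n0+3) (n0+2) (n0+3) (n0+2) (n0+4) ?k5) R1 (?k5 iE (n0 + 4 + length e5)) (R1 @ e5) 2"
    using sel_steps[of R1 "n0+4" n0 "n0+3" "n0+2" "n0+3" "n0+2" ?k5] lR1 R1v by auto
  have Ev: "(R1 @ e5) ! iE = E" using h5(2) R1v unfolding E_def by auto
  define R2 where "R2 = R1 @ e5"
  have lR2: "length R2 = n0 + 4 + length e5" unfolding R2_def using lR1 by simp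
  let ?k6 = "\<lambda>K n6. pst yi 2 (nat (T-1)) {} (\<lambda>_. n0) (\<lambda>_. n0) n6 (\<lambda>D Pm Qm n7.
          stage8 xi yi pix e f g lo t1 t2 tmap n0 (Suc n0) iE K D Pm Qm n7)"
  have R2q: "R2 ! (n0+2) = q" unfolding R2_def using R1v lR1 by (simp add: nth_append)
  obtain e6 where h6: "steps (ksc (n0+2) (nat M) 1 (min M 0) (n0 + 4 + length e5) ?k6) R2
      (?k6 (kres q (nat M) 1 (min M 0)) (n0 + 4 + length e5 + length e6)) (R2 @ e6) (2 * nat M)"
    using ksc_steps[OF lR2, of "n0+2" q "nat M" 1 "min M 0" ?k6] R2q lR2 by auto
  define K where "K = kres q (nat M) 1 (min M 0)"
  have Kv: "K = min M (sigma Cb Vb V)"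
  proof -
    have fq: "1 \<le> \<lfloor>q\<rfloor>" using q1 by (simp add: le_floor_iff)
    have "sigma Cb Vb V = \<lfloor>q\<rfloor>" unfolding sigma_def q_def ..
    moreover have "M \<le> 0 \<Longrightarrow> min M \<lfloor>q\<rfloor> = M" using fq by linarith
    ultimately show ?thesis unfolding K_def kres_val using q1 by auto
  qed
  define R3 where "R3 = R2 @ e6"
  have lR3: "length R3 = n0 + 4 + length e5 + length e6" unfolding R3_def using lR2 by simp
  have R3r: "\<And>i. i < n0 + 4 \<Longrightarrow> R3 ! i = R1 ! i" unfolding R3_def R2_def using lR1 by (simp add: nth_append)
  have R3E: "R3 ! iE = E" unfolding R3_def R2_def using Ev h5(1) lR1 nth_append_left[of iE "R1 @ e5" e6] by simp
  have pv0: "pinv y R3 (\<lambda>_. n0) (\<lambda>_. n0) (2 - 1)"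
    unfolding pinv_def Psem_def Qsem_def using R3r[of n0] R1v lR3 by auto
  have yv3: "\<forall>l. 2 - 1 \<le> l \<and> l \<le> 2 + int (nat (T-1)) - 1 \<longrightarrow> yi l < n0 + 4 + length e5 + length e6 \<and> R3 ! yi l = y l"
    using xy R3r R1r T by auto
  obtain e7 Pm Qm c7 where h7: "pinv y (R3 @ e7) Pm Qm (2 + int (nat (T-1)) - 1)" "c7 \<le> 7 * nat (T-1)"
    "steps (pst yi 2 (nat (T-1)) {} (\<lambda>_. n0) (\<lambda>_. n0) (n0 + 4 + length e5 + length e6) (\<lambda>D Pm Qm n7.
          stage8 xi yi pix e f g lo t1 t2 tmap n0 (Suc n0) iE K D Pm Qm n7)) R3
      (stage8 xi yi pix e f g lo t1 t2 tmap n0 (Suc n0) iE K ({} \<union> {l\<in>{2..2 + int (nat (T-1)) - 1}. y (l-1) < y l}) Pm Qm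
        (n0 + 4 + length e5 + length e6 + length e7)) (R3 @ e7) c7"
    using pst_steps[OF lR3 pv0 _ yv3, where D="{}" and k="stage8 xi yi pix e f g lo t1 t2 tmap n0 (Suc n0) iE K"] by auto
  define D where "D = {l\<in>{2..T}. y (l-1) < y l}"
  have Deq: "{} \<union> {l\<in>{2..2 + int (nat (T-1)) - 1}. y (l-1) < y l} = D" unfolding D_def using T by auto
  define R4 where "R4 = R3 @ e7"
  have lR4: "length R4 = n0 + 4 + length e5 + length e6 + length e7" unfolding R4_def using lR3 by simp
  have pv4: "pinv y R4 Pm Qm T" using h7(1) T unfolding R4_def by simp
  have st7: "steps (gtree T n0 xi yi pix e f g lo M Le t1 t2 tmap) regs
     (stage8 xi yi pix e f g lo t1 t2 tmap n0 (Suc n0) iE K D Pm Qm (length R4)) R4 (4 + 2 + 2 * nat M + c7)"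
  proof -
    have a: "steps (gtree T n0 xi yi pix e f g lo M Le t1 t2 tmap) regs (?k5 iE (n0 + 4 + length e5)) R2 (4 + 2)"
      using steps_trans[OF st1 h5(3)] unfolding R2_def .
    have b: "steps (gtree T n0 xi yi pix e f g lo M Le t1 t2 tmap) regs (?k6 K (n0 + 4 + length e5 + length e6)) R3 (4 + 2 + 2 * nat M)"
      using steps_trans[OF a h6] unfolding R3_def K_def by simp
    show ?thesis using steps_trans[OF b h7(3)[unfolded Deq]] lR4 unfolding R4_def by simp
  qed
  have R4r: "\<And>i. i < n0 + 4 \<Longrightarrow> R4 ! i = R1 ! i" unfolding R4_def using R3r lR3 by (simp add: nth_append)
  have R4E: "R4 ! iE = E" "iE < length R4" unfolding R4_def using R3E h5(1) lR3 by (auto simp: nth_append)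
  have vbs: "vbspec (vbt xi yi pix e f g lo K n0 (Suc n0) iE Pm Qm) R4 t1 t2
     (\<lambda>t. (x t - (P * y t + (Cb - P) * y (t+e))) + (if V * (y (t+f) - y (t+g)) \<le> 0 then 0 else E) * (V * (y (t+f) - y (t+g)))
          + BSv Cb Vb V y lo K t)
     (\<lambda>t. if V * (y (t+f) - y (t+g)) \<le> 0 then 0 else E) 20"
  proof (rule vbt_spec)
    show "4 \<le> length R4" "pix < 4" "n0 < length R4" "Suc n0 < length R4" "iE < length R4" using lR4 len R4E by auto
    show "R4 ! 0 = Cb" "R4 ! 2 = V" "R4 ! pix = P" "R4 ! n0 = 0" "R4 ! Suc n0 = Cb - Vb" "R4 ! iE = E"
      using R4r R1r R1v r0 len R4E by auto
    show "\<forall>l. 1 \<le> l \<and> l \<le> T \<longrightarrow> xi l < length R4 \<and> R4 ! xi l = x l \<and> yi l < length R4 \<and> R4 ! yi l = y l"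
      using xy R4r R1r lR4 by auto
  qed (use pv4 rng par in auto)
  have E0: "0 \<le> E" unfolding E_def using q1 par by simp
  have KT: "nat M \<le> nat T" "nat (T-1) \<le> nat T" "1 \<le> nat T" using par T by auto
  show ?thesis
  proof (cases "t1 \<le> t2")
    case False
    have "run (gtree T n0 xi yi pix e f g lo M Le t1 t2 tmap) regs = (({}, 0, R4 ! 0), 4 + 2 + 2 * nat M + c7)"
      using st7 False unfolding steps_def stage8_def by simp
    then show ?thesis using False h7(2) KT by simp
  next
    case True
    let ?vb = "vbt xi yi pix e f g lo K n0 (Suc n0) iE Pm Qm"
    let ?fin = "\<lambda>b ie'. Leaf (Sopt D lo K b) (tmap b) ie'"
    let ?kk = "\<lambda>iv ie n8. tlp ?vb (t1+1) (nat (t2-t1)) t1 iv ie n8 ?fin"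
    let ?vs = "\<lambda>t. (x t - (P * y t + (Cb - P) * y (t+e))) + (if V * (y (t+f) - y (t+g)) \<le> 0 then 0 else E) * (V * (y (t+f) - y (t+g)))
          + BSv Cb Vb V y lo K t"
    let ?es = "\<lambda>t. if V * (y (t+f) - y (t+g)) \<le> 0 then 0 else E"
    obtain e1 iv ie c where h8: "iv < length (R4 @ [] @ e1)" "ie < length (R4 @ [] @ e1)" "(R4 @ [] @ e1) ! iv = ?vs t1"
      "(R4 @ [] @ e1) ! ie = ?es t1" "c \<le> 20"
      "steps (?vb t1 (length (R4 @ [])) ?kk) (R4 @ []) (?kk iv ie (length (R4 @ [] @ e1))) (R4 @ [] @ e1) c"
      using vbs True unfolding vbspec_def by blast
    have st8: "steps (gtree T n0 xi yi pix e f g lo M Le t1 t2 tmap) regs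
       (tlp ?vb (t1+1) (nat (t2-t1)) t1 iv ie (length (R4 @ e1)) ?fin) (R4 @ e1) (4 + 2 + 2 * nat M + c7 + c)"
    proof -
      have a: "steps (gtree T n0 xi yi pix e f g lo M Le t1 t2 tmap) regs (?vb t1 (length R4) ?kk) R4 (4 + 2 + 2 * nat M + c7)"
        using st7 True unfolding stage8_def by simp
      have b: "steps (?vb t1 (length R4) ?kk) R4 (tlp ?vb (t1+1) (nat (t2-t1)) t1 iv ie (length (R4 @ e1)) ?fin) (R4 @ e1) c"
        using h8(6) by simp
      show ?thesis using steps_trans[OF a b] .
    qed
    have pr: "\<forall>t'. t1 \<le> t' \<and> t' < t1 + 1 \<longrightarrow> ?vs t' \<le> ?vs t1"
    proof (intro allI impI)
      fix t' assume "t1 \<le> t' \<and> t' < t1 + 1"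
      then have "t' = t1" by linarith
      then show "?vs t' \<le> ?vs t1" by simp
    qed
    obtain e2 b' ie' c' where h9: "steps (tlp ?vb (t1+1) (nat (t2-t1)) t1 iv ie (length (R4 @ e1)) ?fin) (R4 @ e1) (?fin b' ie') (R4 @ e2) c'"
      "c' \<le> nat (t2-t1) * (20 + 1)" "t1 \<le> b'" "b' < t1 + 1 + int (nat (t2-t1))"
      "\<forall>t'. t1 \<le> t' \<and> t' < t1 + 1 + int (nat (t2-t1)) \<longrightarrow> ?vs t' \<le> ?vs b'"
      "ie' < length (R4 @ e2)" "(R4 @ e2) ! ie' = ?es b'"
    proof -
      have a: "iv < length (R4 @ e1)" "ie < length (R4 @ e1)" "(R4 @ e1) ! iv = ?vs t1" "(R4 @ e1) ! ie = ?es t1"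
        using h8 by auto
      have b: "t1 < t1 + 1" "t1 + 1 + int (nat (t2-t1)) - 1 \<le> t2" using True by auto
      show ?thesis using tlp_steps[OF vbs a order_refl b(1) pr b(2), of ?fin] that by blast
    qed
    have run: "run (gtree T n0 xi yi pix e f g lo M Le t1 t2 tmap) regs = ((Sopt D lo K b', tmap b', ?es b'), 4 + 2 + 2 * nat M + c7 + c + c')"
    proof -
      have "steps (gtree T n0 xi yi pix e f g lo M Le t1 t2 tmap) regs (Leaf (Sopt D lo K b') (tmap b') ie') (R4 @ e2) (4 + 2 + 2 * nat M + c7 + c + c')"
        using steps_trans[OF st8 h9(1)] .
      then have "run (gtree T n0 xi yi pix e f g lo M Le t1 t2 tmap) regs = (fst (run (Leaf (Sopt D lo K b') (tmap b') ie') (R4 @ e2)),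
          snd (run (Leaf (Sopt D lo K b') (tmap b') ie') (R4 @ e2)) + (4 + 2 + 2 * nat M + c7 + c + c'))"
        unfolding steps_def .
      then show ?thesis by (simp only: run.simps fst_conv snd_conv add_0 h9(7))
    qed
    have bt: "t1 \<le> b'" "b' \<le> t2" using h9(3,4) True by auto
    have cost: "4 + 2 + 2 * nat M + c7 + c + c' \<le> 40 * nat T"
    proof -
      have t12: "1 \<le> t1" "t2 \<le> T" using rng True by auto
      have "nat (t2 - t1 + 1) \<le> nat T" using t12 by (intro nat_mono) simp
      moreover have "nat (t2 - t1 + 1) = nat (t2 - t1) + 1" using True by (simp add: nat_add_distrib)
      ultimately have "nat (t2 - t1) + 1 \<le> nat T" by simp
      moreover have "c' \<le> 21 * nat (t2 - t1)" using h9(2) by simp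
      ultimately show ?thesis using h8(5) h7(2) KT by linarith
    qed
    have bsT: "\<And>t. t1 \<le> t \<Longrightarrow> t \<le> t2 \<Longrightarrow> BSv Cb Vb V y lo K t = bsum Cb Vb V y (Sopt D lo K t) t"
    proof -
      fix t assume "t1 \<le> t" "t \<le> t2"
      then have "t \<le> T" using rng by auto
      then show "BSv Cb Vb V y lo K t = bsum Cb Vb V y (Sopt D lo K t) t"
        unfolding BSv_def lwof_def using bsum_Sopt[OF D_def _ par(4), where t=t and K=K and Cb=Cb and Vb=Vb and V=V] by simp
    qed
    have mem: "(Sopt D lo K b', b', ?es b') \<in> Gfam lo M Le t1 t2 Cb Vb V"
      unfolding Gfam_def Sopt_def using bt E0 Kv unfolding E_def q_def by auto
    have val: "Gviol P e f g Cb Vb V x y (Sopt D lo K b', b', ?es b') = ?vs b'"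
      using bsT[OF bt] by simp
    have opt: "Gviol P e f g Cb Vb V x y gq \<le> ?vs b'" if gq: "gq \<in> Gfam lo M Le t1 t2 Cb Vb V" for gq
    proof -
      obtain S t \<eta> where gqe: "gq = (S, t, \<eta>)" by (cases gq) auto
      have g: "S \<subseteq> {lo..K}" "0 \<le> \<eta>" "\<eta> \<le> E" "t1 \<le> t" "t \<le> t2" "\<forall>s\<in>S. s + 2 \<le> t"
        using gq unfolding gqe Gfam_def Kv E_def q_def by auto
      have tT: "t \<le> T" using rng g by auto
      have Ks: "K \<le> \<lfloor>(Cb - Vb) / V\<rfloor>" using Kv unfolding sigma_def by simp
      have bs: "bsum Cb Vb V y S t \<le> BSv Cb Vb V y lo K t"
        using bsum_le_Sopt[OF D_def tT par(4) par(1) Ks g(1) g(6)] bsT[OF g(4,5)] by simp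
      have et: "\<eta> * (V * (y (t+f) - y (t+g))) \<le> ?es t * (V * (y (t+f) - y (t+g)))"
      proof (cases "V * (y (t+f) - y (t+g)) \<le> 0")
        case True then show ?thesis using g(2) by (simp add: mult_nonneg_nonpos)
      next
        case False then show ?thesis using g(3) by (simp add: mult_right_mono)
      qed
      have "Gviol P e f g Cb Vb V x y gq \<le> ?vs t" unfolding gqe using bs et by simp
      also have "?vs t \<le> ?vs b'" using h9(5) g(4,5) True by auto
      finally show ?thesis .
    qed
    show ?thesis
      apply (simp only: run fst_conv snd_conv)
      using cost mem val opt True by (intro conjI impI exI[of _ "Sopt D lo K b'"] exI[of _ b'] exI[of _ "?es b'"]) auto
  qed
qed


lemma input_len: "length (input_regs T Cb Cu V Vb x y) = 4 + 2 * nat T"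
  unfolding input_regs_def by simp

lemma input_nth:
  assumes "1 \<le> l" "l \<le> T"
  shows "input_regs T Cb Cu V Vb x y ! (3 + nat l) = x l"
    "input_regs T Cb Cu V Vb x y ! (3 + nat T + nat l) = y l"
proof -
  obtain k where k: "nat l = Suc k" using assms by (metis gr0_implies_Suc nat_0_less_mult_iff zero_less_nat_eq mult_1 linorder_not_le zero_less_one less_le_trans)
  have kl: "1 + int k = l" using k assms by linarith
  have kT: "k < nat T" using k assms by linarith
  show "input_regs T Cb Cu V Vb x y ! (3 + nat l) = x l"
    unfolding input_regs_def using k kl kT by (simp add: nth_append)
  show "input_regs T Cb Cu V Vb x y ! (3 + nat T + nat l) = y l"
  proof -
    have "3 + nat T + nat l = 4 + (nat T + k)" using k by simp
    then show ?thesis unfolding input_regs_def using k kl kT by (simp add: nth_append)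
  qed
qed

lemma mvlt_back:
  fixes pix :: nat and e f g lo :: int and Mf :: "int \<Rightarrow> int \<Rightarrow> int" and Lef t1f t2f :: "int \<Rightarrow> int"
  assumes fam: "\<And>T L Cb Vb V. 1 \<le> T \<Longrightarrow> 1 \<le> L \<Longrightarrow> V > 0 \<Longrightarrow> V \<le> Cb - Vb \<Longrightarrow>
      fam T L Cb Vb V = Gfam lo (Mf T L) (Lef L) (t1f T) (t2f T) Cb Vb V"
    and vi: "\<And>Cb Vb V x y q. viol Cb Vb V x y q = Gviol (if pix = 0 then Cb else Vb) e f g Cb Vb V x y q"
    and pix: "pix = 0 \<or> pix = 3"
    and par: "\<And>L. 1 \<le> L \<Longrightarrow> 0 \<le> Lef L" "0 \<le> lo" "\<And>T L. 1 \<le> T \<Longrightarrow> Mf T L \<le> T"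
    and rng: "\<And>T t. 1 \<le> T \<Longrightarrow> t1f T \<le> t \<Longrightarrow> t \<le> t2f T \<Longrightarrow> 1 \<le> t \<and> t \<le> T \<and> 1 \<le> t + e \<and> t + e \<le> T
        \<and> 1 \<le> t + f \<and> t + f \<le> T \<and> 1 \<le> t + g \<and> t + g \<le> T"
  shows "most_violated_linear_time fam viol"
  unfolding most_violated_linear_time_def
proof (intro exI[of _ 40] allI impI)
  fix T L :: int assume T: "1 \<le> T" and L: "1 \<le> L"
  let ?tr = "gtree T (4 + 2 * nat T) (\<lambda>l. 3 + nat l) (\<lambda>l. 3 + nat T + nat l) pix e f g lo (Mf T L) (Lef L) (t1f T) (t2f T) (\<lambda>t. t)"
  show "\<exists>tr. \<forall>Cb Cu V Vb x y. std_params T L Cb Cu V Vb \<and> (\<forall>t\<in>{1..T}. 0 \<le> x t \<and> 0 \<le> y t) \<longrightarrow>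
      (let regs = input_regs T Cb Cu V Vb x y; r = run tr regs; q = fst r
       in snd r \<le> 40 * nat T \<and> ((\<exists>q'\<in>fam T L Cb Vb V. 0 < viol Cb Vb V x y q') \<longrightarrow>
          q \<in> fam T L Cb Vb V \<and> (\<forall>q'\<in>fam T L Cb Vb V. viol Cb Vb V x y q' \<le> viol Cb Vb V x y q)))"
  proof (intro exI[of _ ?tr] allI impI)
    fix Cb Cu V Vb :: real and x y :: "int \<Rightarrow> real"
    assume h: "std_params T L Cb Cu V Vb \<and> (\<forall>t\<in>{1..T}. 0 \<le> x t \<and> 0 \<le> y t)"
    have V: "V > 0" "V \<le> Cb - Vb" using h unfolding std_params_def by auto
    let ?regs = "input_regs T Cb Cu V Vb x y"
    let ?P = "if pix = 0 then Cb else Vb"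
    have pr: "?regs ! pix = ?P" using pix by (auto simp: input_regs_def)
    have xy: "\<forall>l. 1 \<le> l \<and> l \<le> T \<longrightarrow> 3 + nat l < 4 + 2 * nat T \<and> ?regs ! (3 + nat l) = x l
        \<and> 3 + nat T + nat l < 4 + 2 * nat T \<and> ?regs ! (3 + nat T + nat l) = y l"
      using input_nth by auto
    have G: "snd (run ?tr ?regs) \<le> 40 * nat T \<and> (t1f T \<le> t2f T \<longrightarrow> (\<exists>S t \<eta>. fst (run ?tr ?regs) = (S, t, \<eta>)
         \<and> (S, t, \<eta>) \<in> Gfam lo (Mf T L) (Lef L) (t1f T) (t2f T) Cb Vb V
         \<and> (\<forall>gq\<in>Gfam lo (Mf T L) (Lef L) (t1f T) (t2f T) Cb Vb V. Gviol ?P e f g Cb Vb V x y gq \<le> Gviol ?P e f g Cb Vb V x y (S, t, \<eta>))))"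
      by (rule gen_main[OF input_len _ _ _ _ _ pr xy T V par(1)[OF L] par(2) par(3)[OF T]])
         (use pix rng[OF T] in \<open>auto simp: input_regs_def\<close>)
    have famG: "fam T L Cb Vb V = Gfam lo (Mf T L) (Lef L) (t1f T) (t2f T) Cb Vb V" using fam[OF T L V] .
    show "let regs = ?regs; r = run ?tr regs; q = fst r
       in snd r \<le> 40 * nat T \<and> ((\<exists>q'\<in>fam T L Cb Vb V. 0 < viol Cb Vb V x y q') \<longrightarrow>
          q \<in> fam T L Cb Vb V \<and> (\<forall>q'\<in>fam T L Cb Vb V. viol Cb Vb V x y q' \<le> viol Cb Vb V x y q))"
      unfolding Let_def
    proof (intro conjI impI)
      show "snd (run ?tr ?regs) \<le> 40 * nat T" using G by simp
      assume "\<exists>q'\<in>fam T L Cb Vb V. 0 < viol Cb Vb V x y q'"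
      then obtain q' where "q' \<in> Gfam lo (Mf T L) (Lef L) (t1f T) (t2f T) Cb Vb V" using famG by auto
      then have t12: "t1f T \<le> t2f T" unfolding Gfam_def by auto
      then obtain S t \<eta> where r: "fst (run ?tr ?regs) = (S, t, \<eta>)" "(S, t, \<eta>) \<in> Gfam lo (Mf T L) (Lef L) (t1f T) (t2f T) Cb Vb V"
         "\<forall>gq\<in>Gfam lo (Mf T L) (Lef L) (t1f T) (t2f T) Cb Vb V. Gviol ?P e f g Cb Vb V x y gq \<le> Gviol ?P e f g Cb Vb V x y (S, t, \<eta>)"
        using G by blast
      show "fst (run ?tr ?regs) \<in> fam T L Cb Vb V" using r famG by simp
      show "\<forall>q'\<in>fam T L Cb Vb V. viol Cb Vb V x y q' \<le> viol Cb Vb V x y (fst (run ?tr ?regs))"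
        using r famG vi by simp
    qed
  qed
qed

lemma mvlt_fwd:
  fixes pix :: nat and e f g lo :: int and Mf :: "int \<Rightarrow> int \<Rightarrow> int" and Lef t1f t2f :: "int \<Rightarrow> int"
  assumes fam: "\<And>T L Cb Vb V. 1 \<le> T \<Longrightarrow> 1 \<le> L \<Longrightarrow> V > 0 \<Longrightarrow> V \<le> Cb - Vb \<Longrightarrow>
      fam T L Cb Vb V = (\<lambda>(S, t, \<eta>). (S, T + 1 - t, \<eta>)) ` Gfam lo (Mf T L) (Lef L) (t1f T) (t2f T) Cb Vb V"
    and vi: "\<And>T Cb Vb V x y S t \<eta>. viol Cb Vb V x y (S, T + 1 - t, \<eta>)
       = Gviol (if pix = 0 then Cb else Vb) e f g Cb Vb V (\<lambda>l. x (T + 1 - l)) (\<lambda>l. y (T + 1 - l)) (S, t, \<eta>)"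
    and pix: "pix = 0 \<or> pix = 3"
    and par: "\<And>L. 1 \<le> L \<Longrightarrow> 0 \<le> Lef L" "0 \<le> lo" "\<And>T L. 1 \<le> T \<Longrightarrow> Mf T L \<le> T"
    and rng: "\<And>T t. 1 \<le> T \<Longrightarrow> t1f T \<le> t \<Longrightarrow> t \<le> t2f T \<Longrightarrow> 1 \<le> t \<and> t \<le> T \<and> 1 \<le> t + e \<and> t + e \<le> T
        \<and> 1 \<le> t + f \<and> t + f \<le> T \<and> 1 \<le> t + g \<and> t + g \<le> T"
  shows "most_violated_linear_time fam viol"
  unfolding most_violated_linear_time_def
proof (intro exI[of _ 40] allI impI)
  fix T L :: int assume T: "1 \<le> T" and L: "1 \<le> L"
  let ?tr = "gtree T (4 + 2 * nat T) (\<lambda>l. 3 + nat (T + 1 - l)) (\<lambda>l. 3 + nat T + nat (T + 1 - l)) pix e f g lo (Mf T L) (Lef L) (t1f T) (t2f T) (\<lambda>t. T + 1 - t)"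
  show "\<exists>tr. \<forall>Cb Cu V Vb x y. std_params T L Cb Cu V Vb \<and> (\<forall>t\<in>{1..T}. 0 \<le> x t \<and> 0 \<le> y t) \<longrightarrow>
      (let regs = input_regs T Cb Cu V Vb x y; r = run tr regs; q = fst r
       in snd r \<le> 40 * nat T \<and> ((\<exists>q'\<in>fam T L Cb Vb V. 0 < viol Cb Vb V x y q') \<longrightarrow>
          q \<in> fam T L Cb Vb V \<and> (\<forall>q'\<in>fam T L Cb Vb V. viol Cb Vb V x y q' \<le> viol Cb Vb V x y q)))"
  proof (intro exI[of _ ?tr] allI impI)
    fix Cb Cu V Vb :: real and x y :: "int \<Rightarrow> real"
    assume h: "std_params T L Cb Cu V Vb \<and> (\<forall>t\<in>{1..T}. 0 \<le> x t \<and> 0 \<le> y t)"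
    have V: "V > 0" "V \<le> Cb - Vb" using h unfolding std_params_def by auto
    let ?regs = "input_regs T Cb Cu V Vb x y"
    let ?P = "if pix = 0 then Cb else Vb"
    let ?x = "\<lambda>l. x (T + 1 - l)"
    let ?y = "\<lambda>l. y (T + 1 - l)"
    have pr: "?regs ! pix = ?P" using pix by (auto simp: input_regs_def)
    have xy: "\<forall>l. 1 \<le> l \<and> l \<le> T \<longrightarrow> 3 + nat (T + 1 - l) < 4 + 2 * nat T \<and> ?regs ! (3 + nat (T + 1 - l)) = ?x l
        \<and> 3 + nat T + nat (T + 1 - l) < 4 + 2 * nat T \<and> ?regs ! (3 + nat T + nat (T + 1 - l)) = ?y l"
    proof (intro allI impI)
      fix l assume "1 \<le> l \<and> l \<le> T"
      then have "1 \<le> T + 1 - l" "T + 1 - l \<le> T" by auto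
      then show "3 + nat (T + 1 - l) < 4 + 2 * nat T \<and> ?regs ! (3 + nat (T + 1 - l)) = ?x l
        \<and> 3 + nat T + nat (T + 1 - l) < 4 + 2 * nat T \<and> ?regs ! (3 + nat T + nat (T + 1 - l)) = ?y l"
        using input_nth[of "T + 1 - l" T Cb Cu V Vb x y] by auto
    qed
    have G: "snd (run ?tr ?regs) \<le> 40 * nat T \<and> (t1f T \<le> t2f T \<longrightarrow> (\<exists>S t \<eta>. fst (run ?tr ?regs) = (S, T + 1 - t, \<eta>)
         \<and> (S, t, \<eta>) \<in> Gfam lo (Mf T L) (Lef L) (t1f T) (t2f T) Cb Vb V
         \<and> (\<forall>gq\<in>Gfam lo (Mf T L) (Lef L) (t1f T) (t2f T) Cb Vb V. Gviol ?P e f g Cb Vb V ?x ?y gq \<le> Gviol ?P e f g Cb Vb V ?x ?y (S, t, \<eta>))))"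
      by (rule gen_main[OF input_len _ _ _ _ _ pr xy T V par(1)[OF L] par(2) par(3)[OF T]])
         (use pix rng[OF T] in \<open>auto simp: input_regs_def\<close>)
    have famG: "fam T L Cb Vb V = (\<lambda>(S, t, \<eta>). (S, T + 1 - t, \<eta>)) ` Gfam lo (Mf T L) (Lef L) (t1f T) (t2f T) Cb Vb V"
      using fam[OF T L V] .
    show "let regs = ?regs; r = run ?tr regs; q = fst r
       in snd r \<le> 40 * nat T \<and> ((\<exists>q'\<in>fam T L Cb Vb V. 0 < viol Cb Vb V x y q') \<longrightarrow>
          q \<in> fam T L Cb Vb V \<and> (\<forall>q'\<in>fam T L Cb Vb V. viol Cb Vb V x y q' \<le> viol Cb Vb V x y q))"
      unfolding Let_def
    proof (intro conjI impI)
      show "snd (run ?tr ?regs) \<le> 40 * nat T" using G by simp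
      assume "\<exists>q'\<in>fam T L Cb Vb V. 0 < viol Cb Vb V x y q'"
      then obtain q' where "q' \<in> Gfam lo (Mf T L) (Lef L) (t1f T) (t2f T) Cb Vb V" using famG by auto
      then have t12: "t1f T \<le> t2f T" unfolding Gfam_def by auto
      then obtain S t \<eta> where r: "fst (run ?tr ?regs) = (S, T + 1 - t, \<eta>)" "(S, t, \<eta>) \<in> Gfam lo (Mf T L) (Lef L) (t1f T) (t2f T) Cb Vb V"
         "\<forall>gq\<in>Gfam lo (Mf T L) (Lef L) (t1f T) (t2f T) Cb Vb V. Gviol ?P e f g Cb Vb V ?x ?y gq \<le> Gviol ?P e f g Cb Vb V ?x ?y (S, t, \<eta>)"
        using G by blast
      show "fst (run ?tr ?regs) \<in> fam T L Cb Vb V" using r famG by force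
      show "\<forall>q'\<in>fam T L Cb Vb V. viol Cb Vb V x y q' \<le> viol Cb Vb V x y (fst (run ?tr ?regs))"
      proof
        fix q' assume "q' \<in> fam T L Cb Vb V"
        then obtain S' t' \<eta>' where q': "q' = (S', T + 1 - t', \<eta>')" "(S', t', \<eta>') \<in> Gfam lo (Mf T L) (Lef L) (t1f T) (t2f T) Cb Vb V"
          using famG by auto
        show "viol Cb Vb V x y q' \<le> viol Cb Vb V x y (fst (run ?tr ?regs))"
          unfolding q'(1) r(1) vi using r(3) q'(2) by blast
      qed
    qed
  qed
qed


lemma img_rev: "(\<lambda>(S, t, \<eta>). (S, T + 1 - t, \<eta>)) ` (A :: ineq set) = {(S, t, \<eta>). (S, T + 1 - t, \<eta>) \<in> A}"
proof (intro set_eqI iffI)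
  fix z assume "z \<in> (\<lambda>(S, t, \<eta>). (S, T + 1 - t, \<eta>)) ` A"
  then show "z \<in> {(S, t, \<eta>). (S, T + 1 - t, \<eta>) \<in> A}" by auto
next
  fix z assume z: "z \<in> {(S, t, \<eta>). (S, T + 1 - t, \<eta>) \<in> A}"
  obtain S t \<eta> where zz: "z = (S, t, \<eta>)" by (cases z) auto
  have "(S, T + 1 - t, \<eta>) \<in> A" using z zz by simp
  then show "z \<in> (\<lambda>(S, t, \<eta>). (S, T + 1 - t, \<eta>)) ` A"
    unfolding zz by (rule image_eqI[rotated]) simp
qed

lemma fsum_rev: "fsum Cb Vb V y S (T + 1 - t) = bsum Cb Vb V (\<lambda>l. y (T + 1 - l)) S t"
  unfolding fsum_def bsum_def by (rule sum.cong[OF refl]) (simp add: algebra_simps)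


lemma p1: "most_violated_linear_time F1 viol1"
proof (rule mvlt_back[where pix=0 and e=0 and f=0 and g=0 and lo=0 and Mf="\<lambda>T L. min (L-1) (T-2)"
      and Lef="\<lambda>L. 0" and t1f="\<lambda>T. 1" and t2f="\<lambda>T. T"])
  fix T L :: int and Cb Vb V :: real
  assume "V > 0" "V \<le> Cb - Vb"
  then have q: "0 < (Cb - Vb) / V" by (intro divide_pos_pos) auto
  show "F1 T L Cb Vb V = Gfam 0 (min (L-1) (T-2)) 0 1 T Cb Vb V"
    unfolding F1_def Gfam_def using q by (auto simp: min.assoc)
next
  fix Cb Vb V :: real and x y :: "int \<Rightarrow> real" and q :: ineq
  show "viol1 Cb Vb V x y q = Gviol (if (0::nat) = 0 then Cb else Vb) 0 0 0 Cb Vb V x y q"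
    by (cases q) simp
qed auto

lemma p3: "most_violated_linear_time F3 viol3"
proof (rule mvlt_back[where pix=0 and e=0 and f=0 and g=1 and lo=0 and Mf="\<lambda>T L. min (L-1) (T-3)"
      and Lef="\<lambda>L. L - 1" and t1f="\<lambda>T. 1" and t2f="\<lambda>T. T - 1"])
  fix T L :: int and Cb Vb V :: real
  show "F3 T L Cb Vb V = Gfam 0 (min (L-1) (T-3)) (L-1) 1 (T-1) Cb Vb V"
    unfolding F3_def Gfam_def by (auto simp: min.assoc)
next
  fix Cb Vb V :: real and x y :: "int \<Rightarrow> real" and q :: ineq
  show "viol3 Cb Vb V x y q = Gviol (if (0::nat) = 0 then Cb else Vb) 0 0 1 Cb Vb V x y q"
    by (cases q) (simp add: algebra_simps)
qed auto

lemma p5: "most_violated_linear_time F5 viol5"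
proof (rule mvlt_back[where pix=3 and e="-1" and f="-1" and g=0 and lo=1 and Mf="\<lambda>T L. min L (T-2)"
      and Lef="\<lambda>L. L" and t1f="\<lambda>T. 2" and t2f="\<lambda>T. T"])
  fix T L :: int and Cb Vb V :: real
  show "F5 T L Cb Vb V = Gfam 1 (min L (T-2)) L 2 T Cb Vb V"
    unfolding F5_def Gfam_def by (auto simp: min.assoc)
next
  fix Cb Vb V :: real and x y :: "int \<Rightarrow> real" and q :: ineq
  show "viol5 Cb Vb V x y q = Gviol (if (3::nat) = 0 then Cb else Vb) (-1) (-1) 0 Cb Vb V x y q"
    by (cases q) (simp add: algebra_simps)
qed auto

lemma p2: "most_violated_linear_time F2 viol2"
proof (rule mvlt_fwd[where pix=0 and e=0 and f=0 and g=0 and lo=0 and Mf="\<lambda>T L. min (L-1) (T-2)"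
      and Lef="\<lambda>L. 0" and t1f="\<lambda>T. 1" and t2f="\<lambda>T. T"])
  fix T L :: int and Cb Vb V :: real
  assume "V > 0" "V \<le> Cb - Vb"
  then have q: "0 < (Cb - Vb) / V" by (intro divide_pos_pos) auto
  show "F2 T L Cb Vb V = (\<lambda>(S, t, \<eta>). (S, T + 1 - t, \<eta>)) ` Gfam 0 (min (L-1) (T-2)) 0 1 T Cb Vb V"
    unfolding img_rev F2_def Gfam_def using q by (auto simp: min.assoc)
next
  fix T :: int and Cb Vb V :: real and x y :: "int \<Rightarrow> real" and S t \<eta>
  show "viol2 Cb Vb V x y (S, T + 1 - t, \<eta>) = Gviol (if (0::nat) = 0 then Cb else Vb) 0 0 0 Cb Vb V
      (\<lambda>l. x (T + 1 - l)) (\<lambda>l. y (T + 1 - l)) (S, t, \<eta>)"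
    by (simp add: fsum_rev)
qed auto

lemma p4: "most_violated_linear_time F4 viol4"
proof (rule mvlt_fwd[where pix=0 and e=0 and f=0 and g=1 and lo=0 and Mf="\<lambda>T L. min (L-1) (T-3)"
      and Lef="\<lambda>L. L - 1" and t1f="\<lambda>T. 1" and t2f="\<lambda>T. T - 1"])
  fix T L :: int and Cb Vb V :: real
  show "F4 T L Cb Vb V = (\<lambda>(S, t, \<eta>). (S, T + 1 - t, \<eta>)) ` Gfam 0 (min (L-1) (T-3)) (L-1) 1 (T-1) Cb Vb V"
    unfolding img_rev F4_def Gfam_def by (auto simp: min.assoc)
next
  fix T :: int and Cb Vb V :: real and x y :: "int \<Rightarrow> real" and S t \<eta>
  show "viol4 Cb Vb V x y (S, T + 1 - t, \<eta>) = Gviol (if (0::nat) = 0 then Cb else Vb) 0 0 1 Cb Vb V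
      (\<lambda>l. x (T + 1 - l)) (\<lambda>l. y (T + 1 - l)) (S, t, \<eta>)"
    using fsum_rev[of Cb Vb V y S T t] by (simp add: algebra_simps)
qed auto

lemma p6: "most_violated_linear_time F6 viol6"
proof (rule mvlt_fwd[where pix=3 and e="-1" and f="-1" and g=0 and lo=1 and Mf="\<lambda>T L. min L (T-2)"
      and Lef="\<lambda>L. L" and t1f="\<lambda>T. 2" and t2f="\<lambda>T. T"])
  fix T L :: int and Cb Vb V :: real
  show "F6 T L Cb Vb V = (\<lambda>(S, t, \<eta>). (S, T + 1 - t, \<eta>)) ` Gfam 1 (min L (T-2)) L 2 T Cb Vb V"
    unfolding img_rev F6_def Gfam_def by (auto simp: min.assoc)
next
  fix T :: int and Cb Vb V :: real and x y :: "int \<Rightarrow> real" and S t \<eta>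
  show "viol6 Cb Vb V x y (S, T + 1 - t, \<eta>) = Gviol (if (3::nat) = 0 then Cb else Vb) (-1) (-1) 0 Cb Vb V
      (\<lambda>l. x (T + 1 - l)) (\<lambda>l. y (T + 1 - l)) (S, t, \<eta>)"
    using fsum_rev[of Cb Vb V y S T t] by (simp add: algebra_simps)
qed auto

theorem proposition7:
  shows "most_violated_linear_time F1 viol1 \<and> most_violated_linear_time F2 viol2
    \<and> most_violated_linear_time F3 viol3 \<and> most_violated_linear_time F4 viol4
    \<and> most_violated_linear_time F5 viol5 \<and> most_violated_linear_time F6 viol6"
  using p1 p2 p3 p4 p5 p6 by blast


end
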